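(* Assume $\theta_n>0$ for all $n$, that there are constants $c_j$ with $\sum_{j\ge1}\frac{c_j}{j}<\infty$ such that $\frac{\theta_{n-j}\theta_j}{\theta_n}<c_j$ for all $n$ and all $1\le j\le\frac n2$, and that $\frac{\theta_{n+1}}{\theta_n}\to1$ as $n\to\infty$. Then $\sum_{j\ge0}h_j<\infty$, and for every fixed integer $m\ge0$, \[ \lim_{n\to\infty}\mathbb{P}_n(L_1=n-m)=\frac{h_m}{\sum_{j\ge0}h_j}. \] Moreover, $R_1,R_2,R_3,\dots$ converge weakly to independent Poisson random variables with respective means $\theta_1,\frac{\theta_2}2,\frac{\theta_3}3,\dots$, and $K-1$ converges in distribution to a Poisson random variable with mean $\sum_{j\ge1}\frac{\theta_j}j$.
   Context: For $\sigma\in\mathcal{S}_n$ (permutations of $\{1,\dots,n\}$), $R_j(\sigma)$ is the number of cycles of length $j$, $L_1(\sigma)$ the length of the cycle containing $1$, $K(\sigma)=\sum_jR_j(\sigma)$. Given parameters $\theta_j\ge0$, $h_0=1$, $h_n=\frac1{n!}\sum_{\sigma\in\mathcal{S}_n}\prod_j\theta_j^{R_j(\sigma)}$, and $\mathbb{P}_n(\sigma)=\frac1{n!h_n}\prod_j\theta_j^{R_j(\sigma)}$. *)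

theory Defs
  imports "HOL-Analysis.Analysis" "HOL-Combinatorics.Combinatorics"
begin

definition perms :: "nat \<Rightarrow> (nat \<Rightarrow> nat) set" where
  "perms n = {\<sigma>. \<sigma> permutes {1..n}}"

definition cycles_of :: "nat \<Rightarrow> (nat \<Rightarrow> nat) \<Rightarrow> nat set set" where
  "cycles_of n \<sigma> = {orbit \<sigma> x | x. x \<in> {1..n}}"

definition Rcyc :: "nat \<Rightarrow> nat \<Rightarrow> (nat \<Rightarrow> nat) \<Rightarrow> nat" where
  "Rcyc n j \<sigma> = card {C \<in> cycles_of n \<sigma>. card C = j}"

definition L1 :: "(nat \<Rightarrow> nat) \<Rightarrow> nat" where
  "L1 \<sigma> = card (orbit \<sigma> 1)"

definition Kcyc :: "nat \<Rightarrow> (nat \<Rightarrow> nat) \<Rightarrow> nat" where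
  "Kcyc n \<sigma> = card (cycles_of n \<sigma>)"

definition wt :: "(nat \<Rightarrow> real) \<Rightarrow> nat \<Rightarrow> (nat \<Rightarrow> nat) \<Rightarrow> real" where
  "wt \<theta> n \<sigma> = (\<Prod>j\<in>{1..n}. \<theta> j ^ Rcyc n j \<sigma>)"

definition hseq :: "(nat \<Rightarrow> real) \<Rightarrow> nat \<Rightarrow> real" where
  "hseq \<theta> n = (1 / fact n) * (\<Sum>\<sigma>\<in>perms n. wt \<theta> n \<sigma>)"

definition Pn :: "(nat \<Rightarrow> real) \<Rightarrow> nat \<Rightarrow> ((nat \<Rightarrow> nat) \<Rightarrow> bool) \<Rightarrow> real" where
  "Pn \<theta> n E = (\<Sum>\<sigma>\<in>{\<sigma>\<in>perms n. E \<sigma>}. wt \<theta> n \<sigma>) / (fact n * hseq \<theta> n)"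

definition poisson :: "real \<Rightarrow> nat \<Rightarrow> real" where
  "poisson \<mu> k = \<mu> ^ k / fact k * exp (- \<mu>)"

end

theory Submission
  imports Defs "HOL-Computational_Algebra.Formal_Power_Series"
begin



lemma orbit_insert_pt:
  assumes p: "p permutes T" and fin: "finite T" and x: "x \<notin> T" and b: "b \<in> T"
  shows "orbit (Transposition.transpose x b \<circ> p) x = insert x (orbit p b)"
proof -
  define \<sigma> where "\<sigma> = Transposition.transpose x b \<circ> p"
  have pperm: "permutation p" using p fin permutation_permutes by blast
  have sperm: "permutation \<sigma>" unfolding \<sigma>_def
    by (intro permutation_compose pperm permutation_swap_id)
  have px: "p x = x" using p x by (simp add: permutes_not_in)
  have sx: "\<sigma> x = b" by (simp add: \<sigma>_def px)
  have pT: "p y \<in> T" if "y \<in> T" for y using p that by (simp add: permutes_in_image)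
  have sy: "\<sigma> y = (if p y = b then x else p y)" if "y \<in> T" for y
  proof -
    have "p y \<noteq> x" using pT[OF that] x by auto
    then show ?thesis by (auto simp: \<sigma>_def transpose_def)
  qed
  have orbT: "orbit p b \<subseteq> T" using permutes_orbit_subset[OF p b] .
  have "orbit \<sigma> x \<subseteq> insert x (orbit p b)"
  proof
    fix y assume "y \<in> orbit \<sigma> x"
    then show "y \<in> insert x (orbit p b)"
    proof induction
      case base
      then show ?case using sx permutation_self_in_orbit[OF pperm] by auto
    next
      case (step y)
      from step.IH show ?case
      proof
        assume "y = x" then show ?thesis using sx permutation_self_in_orbit[OF pperm] by auto
      next
        assume yo: "y \<in> orbit p b"
        then have "y \<in> T" using orbT by auto
        then show ?thesis using sy[of y] yo by (auto intro: orbit.step)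
      qed
    qed
  qed
  moreover have "orbit p b \<subseteq> orbit \<sigma> x"
  proof
    fix y assume "y \<in> orbit p b"
    then show "y \<in> orbit \<sigma> x"
    proof induction
      case base
      show ?case
      proof (cases "p b = b")
        case True then show ?thesis using sx orbit.base[of \<sigma> x] by simp
      next
        case False
        then have "\<sigma> b = p b" using sy[OF b] by simp
        moreover have "b \<in> orbit \<sigma> x" using sx orbit.base[of \<sigma> x] by simp
        ultimately show ?thesis by (metis orbit.step)
      qed
    next
      case (step y)
      have yT: "y \<in> T" using step.hyps orbT by auto
      show ?case
      proof (cases "p y = b")
        case True then show ?thesis using sx orbit.base[of \<sigma> x] by simp
      next
        case False
        then have "\<sigma> y = p y" using sy[OF yT] by simp
        then show ?thesis using step.IH by (metis orbit.step)
      qed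
    qed
  qed
  moreover have "x \<in> orbit \<sigma> x" using permutation_self_in_orbit[OF sperm] .
  ultimately show ?thesis unfolding \<sigma>_def[symmetric] by blast
qed

definition cycx :: "nat set \<Rightarrow> nat \<Rightarrow> (nat \<Rightarrow> nat) set" where
  "cycx A x = {\<tau>. \<tau> permutes A \<and> orbit \<tau> x = A}"

lemma transpose_comp_inj:
  assumes "x \<notin> T" "p permutes T" "q permutes T"
    and eq: "Transposition.transpose x b \<circ> p = Transposition.transpose x c \<circ> q"
  shows "b = c \<and> p = q"
proof -
  have px: "p x = x" "q x = x" using assms by (auto simp: permutes_not_in)
  have "b = (Transposition.transpose x b \<circ> p) x" using px by simp
  also have "\<dots> = (Transposition.transpose x c \<circ> q) x" using eq by simp
  also have "\<dots> = c" using px by simp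
  finally have bc: "b = c" .
  then have "Transposition.transpose x b \<circ> (Transposition.transpose x b \<circ> p) = Transposition.transpose x b \<circ> (Transposition.transpose x b \<circ> q)"
    using eq by simp
  then have "p = q" by (simp add: o_assoc)
  with bc show ?thesis by simp
qed

lemma card_cycx:
  assumes "finite A" "x \<in> A"
  shows "card (cycx A x) = fact (card A - 1)"
  using assms
proof (induction "card A" arbitrary: A x rule: less_induct)
  case less
  show ?case
  proof (cases "A = {x}")
    case True
    have "cycx A x = {id}"
      unfolding cycx_def True using orbit_eq_singleton_iff[of id x] by auto
    then show ?thesis using True by simp
  next
    case False
    define T where "T = A - {x}"
    have AT: "A = insert x T" "x \<notin> T" "finite T" using less.prems by (auto simp: T_def)
    have Tne: "T \<noteq> {}" using False less.prems by (auto simp: T_def)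
    have cT: "card T = card A - 1" using less.prems by (simp add: T_def)
    define D where "D = (SIGMA b:T. cycx T b)"
    define h :: "nat \<times> (nat \<Rightarrow> nat) \<Rightarrow> (nat \<Rightarrow> nat)" where "h = (\<lambda>(b, p). Transposition.transpose x b \<circ> p)"
    have "bij_betw h D (cycx A x)"
    proof (rule bij_betw_imageI)
      show "inj_on h D"
      proof (rule inj_onI)
        fix u v assume "u \<in> D" "v \<in> D" "h u = h v"
        then obtain b p c q where "u = (b, p)" "v = (c, q)" "p permutes T" "q permutes T"
          "Transposition.transpose x b \<circ> p = Transposition.transpose x c \<circ> q"
          by (auto simp: D_def h_def cycx_def)
        then show "u = v" using transpose_comp_inj[OF AT(2), of p q b c] by simp
      qed
      show "h ` D = cycx A x"
      proof
        show "h ` D \<subseteq> cycx A x"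
        proof
          fix \<sigma> assume "\<sigma> \<in> h ` D"
          then obtain b p where bp: "b \<in> T" "p permutes T" "orbit p b = T" "\<sigma> = Transposition.transpose x b \<circ> p"
            by (auto simp: D_def h_def cycx_def)
          have "\<sigma> permutes A" unfolding AT(1) bp(4)
            by (rule permutes_compose[OF permutes_subset[OF bp(2)] permutes_swap_id]) (use bp in auto)
          moreover have "orbit \<sigma> x = A" using orbit_insert_pt[OF bp(2) AT(3) AT(2) bp(1)] bp AT by simp
          ultimately show "\<sigma> \<in> cycx A x" by (simp add: cycx_def)
        qed
        show "cycx A x \<subseteq> h ` D"
        proof
          fix \<sigma> assume s: "\<sigma> \<in> cycx A x"
          then have sA: "\<sigma> permutes insert x T" and so: "orbit \<sigma> x = A" by (auto simp: cycx_def AT)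
          define b where "b = \<sigma> x"
          define p where "p = Transposition.transpose x b \<circ> \<sigma>"
          have bp: "b \<in> insert x T" "p permutes T" "\<sigma> = Transposition.transpose x b \<circ> p"
          proof -
            show "b \<in> insert x T" unfolding b_def using permutes_in_image[OF sA, of x] by simp
            show "p permutes T" unfolding p_def b_def by (rule permutes_insert_lemma[OF sA])
            show "\<sigma> = Transposition.transpose x b \<circ> p" unfolding p_def by (simp add: fun_eq_iff)
          qed
          have "b \<noteq> x"
          proof
            assume "b = x"
            then have "\<sigma> = p" using bp by simp
            then have "\<sigma> x = x" using bp AT by (simp add: permutes_not_in)
            then have "orbit \<sigma> x = {x}" by (simp add: orbit_eq_singleton_iff)
            then show False using so False by simp
          qed
          then have bT: "b \<in> T" using bp by simp
          have "insert x (orbit p b) = insert x T"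
            using orbit_insert_pt[OF bp(2) AT(3) AT(2) bT] so bp AT by simp
          moreover have "x \<notin> orbit p b" using permutes_orbit_subset[OF bp(2) bT] AT by auto
          ultimately have "orbit p b = T" using AT by (metis Diff_insert_absorb)
          then have "(b, p) \<in> D" using bT bp by (simp add: D_def cycx_def)
          then show "\<sigma> \<in> h ` D" using bp by (auto simp: h_def)
        qed
      qed
    qed
    then have "card (cycx A x) = card D" by (simp add: bij_betw_same_card)
    also have "card D = (\<Sum>b\<in>T. card (cycx T b))"
      unfolding D_def
    proof (rule card_SigmaI)
      show "finite T" using AT by simp
      show "\<forall>b\<in>T. finite (cycx T b)"
        using finite_permutations[OF AT(3)] by (auto simp: cycx_def)
    qed
    also have "\<dots> = (\<Sum>b\<in>T. fact (card T - 1))"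
    proof (rule sum.cong[OF refl])
      fix b assume "b \<in> T"
      have "card T < card A" using cT less.prems card_gt_0_iff[of A] by auto
      then show "card (cycx T b) = fact (card T - 1)"
        by (rule less.hyps) (use AT \<open>b \<in> T\<close> in auto)
    qed
    also have "\<dots> = card T * fact (card T - 1)" by simp
    also have "\<dots> = fact (card T)"
    proof -
      have "card T > 0" using Tne AT by (simp add: card_gt_0_iff)
      then show ?thesis by (simp add: fact_reduce[of "card T"])
    qed
    finally show ?thesis using cT by simp
  qed
qed


definition cyc :: "nat set \<Rightarrow> (nat \<Rightarrow> nat) \<Rightarrow> nat set set" where
  "cyc S \<sigma> = {orbit \<sigma> y | y. y \<in> S}"

definition mct :: "nat set \<Rightarrow> (nat \<Rightarrow> nat) \<Rightarrow> nat multiset" where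
  "mct S \<sigma> = image_mset card (mset_set (cyc S \<sigma>))"

definition glue :: "nat set \<Rightarrow> (nat \<Rightarrow> nat) \<Rightarrow> (nat \<Rightarrow> nat) \<Rightarrow> nat \<Rightarrow> nat" where
  "glue A \<tau> \<rho> = (\<lambda>y. if y \<in> A then \<tau> y else \<rho> y)"

lemma finite_cyc: "finite S \<Longrightarrow> finite (cyc S \<sigma>)"
  unfolding cyc_def by simp

lemma glue_props:
  assumes S: "finite S" and xA: "x \<in> A" and AS: "A \<subseteq> S"
    and \<tau>: "\<tau> permutes A" "orbit \<tau> x = A" and \<rho>: "\<rho> permutes (S - A)"
  shows "glue A \<tau> \<rho> permutes S"
    and "orbit (glue A \<tau> \<rho>) x = A"
    and "perm_restrict (glue A \<tau> \<rho>) A = \<tau>"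
    and "perm_restrict (glue A \<tau> \<rho>) (S - A) = \<rho>"
    and "cyc S (glue A \<tau> \<rho>) = insert A (cyc (S - A) \<rho>)"
    and "A \<notin> cyc (S - A) \<rho>"
proof -
  have \<tau>in: "\<tau> y \<in> A" if "y \<in> A" for y using \<tau>(1) that by (simp add: permutes_in_image)
  have \<rho>in: "\<rho> y \<in> S - A" if "y \<in> S - A" for y using permutes_in_image[OF \<rho>, of y] that by simp
  have \<tau>out: "\<tau> y = y" if "y \<notin> A" for y using \<tau>(1) that by (simp add: permutes_not_in)
  have \<rho>out: "\<rho> y = y" if "y \<notin> S - A" for y using \<rho> that by (simp add: permutes_not_in)
  have comp: "glue A \<tau> \<rho> = \<tau> \<circ> \<rho>"
  proof
    fix y show "glue A \<tau> \<rho> y = (\<tau> \<circ> \<rho>) y"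
    proof (cases "y \<in> A")
      case True then show ?thesis by (simp add: glue_def \<rho>out)
    next
      case False
      show ?thesis
      proof (cases "y \<in> S")
        case True
        then have "\<rho> y \<in> S - A" using \<rho>in False by simp
        then show ?thesis using False by (simp add: glue_def \<tau>out)
      next
        case F2: False
        then show ?thesis using False by (simp add: glue_def \<tau>out \<rho>out)
      qed
    qed
  qed
  show "glue A \<tau> \<rho> permutes S" unfolding comp
    by (rule permutes_compose[OF permutes_subset[OF \<rho>] permutes_subset[OF \<tau>(1)]]) (use AS in auto)
  have og: "orbit (glue A \<tau> \<rho>) y = orbit \<tau> y" if "y \<in> A" for y
    by (rule orbit_cong0[OF that]) (auto simp: glue_def \<tau>in)
  then show "orbit (glue A \<tau> \<rho>) x = A" using xA \<tau>(2) by simp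
  show "perm_restrict (glue A \<tau> \<rho>) A = \<tau>"
    by (auto simp: fun_eq_iff perm_restrict_def glue_def \<tau>out)
  show "perm_restrict (glue A \<tau> \<rho>) (S - A) = \<rho>"
    by (auto simp: fun_eq_iff perm_restrict_def glue_def \<rho>out)
  have cycl: "cyclic_on \<tau> A" unfolding cyclic_on_def using xA \<tau>(2) by blast
  have oA: "orbit (glue A \<tau> \<rho>) y = A" if "y \<in> A" for y
    using og[OF that] orbit_cyclic_eq3[OF cycl that] by simp
  have oB: "orbit (glue A \<tau> \<rho>) y = orbit \<rho> y" if "y \<in> S - A" for y
    by (rule orbit_cong0[OF that]) (use \<rho>in in \<open>auto simp: glue_def Pi_def\<close>)
  show "cyc S (glue A \<tau> \<rho>) = insert A (cyc (S - A) \<rho>)"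
  proof
    show "cyc S (glue A \<tau> \<rho>) \<subseteq> insert A (cyc (S - A) \<rho>)"
    proof
      fix C assume "C \<in> cyc S (glue A \<tau> \<rho>)"
      then obtain y where y: "y \<in> S" "C = orbit (glue A \<tau> \<rho>) y" by (auto simp: cyc_def)
      show "C \<in> insert A (cyc (S - A) \<rho>)"
      proof (cases "y \<in> A")
        case True then show ?thesis using oA y by simp
      next
        case False then show ?thesis using oB[of y] y by (auto simp: cyc_def)
      qed
    qed
    show "insert A (cyc (S - A) \<rho>) \<subseteq> cyc S (glue A \<tau> \<rho>)"
    proof
      fix C assume "C \<in> insert A (cyc (S - A) \<rho>)"
      then show "C \<in> cyc S (glue A \<tau> \<rho>)"
      proof
        assume "C = A" then show ?thesis using oA[OF xA] xA AS unfolding cyc_def by blast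
      next
        assume "C \<in> cyc (S - A) \<rho>"
        then obtain y where y: "y \<in> S - A" "C = orbit \<rho> y" by (auto simp: cyc_def)
        then show ?thesis using oB[OF y(1)] unfolding cyc_def by auto
      qed
    qed
  qed
  show "A \<notin> cyc (S - A) \<rho>"
  proof
    assume "A \<in> cyc (S - A) \<rho>"
    then obtain y where y: "y \<in> S - A" "A = orbit \<rho> y" by (auto simp: cyc_def)
    then have "A \<subseteq> S - A" using permutes_orbit_subset[OF \<rho> y(1)] by simp
    then show False using xA by auto
  qed
qed

lemma restrict_props:
  assumes S: "finite S" and \<sigma>: "\<sigma> permutes S" and x: "x \<in> S"
  defines "A \<equiv> orbit \<sigma> x"
  shows "x \<in> A" "A \<subseteq> S" "perm_restrict \<sigma> A permutes A" "orbit (perm_restrict \<sigma> A) x = A"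
    "perm_restrict \<sigma> (S - A) permutes (S - A)"
    "glue A (perm_restrict \<sigma> A) (perm_restrict \<sigma> (S - A)) = \<sigma>"
proof -
  have perm: "permutation \<sigma>" using S \<sigma> permutation_permutes by blast
  show xA: "x \<in> A" unfolding A_def by (rule permutation_self_in_orbit[OF perm])
  show AS: "A \<subseteq> S" unfolding A_def by (rule permutes_orbit_subset[OF \<sigma> x])
  have cycl: "cyclic_on \<sigma> A" unfolding A_def by (rule cyclic_on_orbit[OF \<sigma> S])
  have sA: "\<sigma> y \<in> A" if "y \<in> A" for y by (rule cyclic_on_inI[OF cycl that])
  have finA: "finite A" using AS S finite_subset by blast
  have injA: "inj_on \<sigma> A" using permutes_inj[OF \<sigma>] by (simp add: inj_on_def inj_def)
  have imA: "\<sigma> ` A = A" by (rule endo_inj_surj[OF finA _ injA]) (use sA in auto)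
  have "bij_betw (perm_restrict \<sigma> A) A A"
  proof (rule bij_betw_imageI)
    show "inj_on (perm_restrict \<sigma> A) A" using injA by (simp add: inj_on_def perm_restrict_def)
    show "perm_restrict \<sigma> A ` A = A" using imA by (simp add: perm_restrict_def)
  qed
  then show "perm_restrict \<sigma> A permutes A"
    by (rule bij_imp_permutes) (simp add: perm_restrict_def)
  show "orbit (perm_restrict \<sigma> A) x = A"
  proof -
    have "orbit (perm_restrict \<sigma> A) x = orbit \<sigma> x"
      by (rule orbit_cong0[OF xA]) (auto simp: perm_restrict_def sA)
    then show ?thesis by (simp add: A_def)
  qed
  show "perm_restrict \<sigma> (S - A) permutes (S - A)" by (rule perm_restrict_diff_cyclic[OF \<sigma> cycl])
  show "glue A (perm_restrict \<sigma> A) (perm_restrict \<sigma> (S - A)) = \<sigma>"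
    using \<sigma> by (auto simp: fun_eq_iff glue_def perm_restrict_def permutes_not_in)
qed


lemma finite_cycx: "finite A \<Longrightarrow> finite (cycx A x)"
  unfolding cycx_def by (rule finite_subset[OF _ finite_permutations[of A]]) auto

lemma decomp_sum:
  fixes F :: "(nat \<Rightarrow> nat) \<Rightarrow> real"
  assumes S: "finite S" and x: "x \<in> S"
  shows "(\<Sum>\<sigma>\<in>{\<sigma>. \<sigma> permutes S}. F \<sigma>) =
    (\<Sum>A\<in>{A. x \<in> A \<and> A \<subseteq> S}. \<Sum>\<tau>\<in>cycx A x. \<Sum>\<rho>\<in>{\<rho>. \<rho> permutes (S - A)}. F (glue A \<tau> \<rho>))"
proof -
  define \<A> where "\<A> = {A. x \<in> A \<and> A \<subseteq> S}"
  define D where "D = (SIGMA A:\<A>. cycx A x \<times> {\<rho>. \<rho> permutes (S - A)})"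
  define h where "h = (\<lambda>(A, \<tau>, \<rho>). glue A \<tau> \<rho>)"
  define h' where "h' = (\<lambda>\<sigma>. (orbit \<sigma> x, perm_restrict \<sigma> (orbit \<sigma> x), perm_restrict \<sigma> (S - orbit \<sigma> x)))"
  have finA: "finite \<A>" unfolding \<A>_def by (rule finite_subset[of _ "Pow S"]) (use S in auto)
  have bij: "bij_betw h D {\<sigma>. \<sigma> permutes S}"
  proof (rule bij_betw_byWitness[where f' = h'])
    show "\<forall>d\<in>D. h' (h d) = d"
    proof
      fix d assume "d \<in> D"
      then obtain A \<tau> \<rho> where d: "d = (A, \<tau>, \<rho>)" "x \<in> A" "A \<subseteq> S" "\<tau> permutes A" "orbit \<tau> x = A"
        "\<rho> permutes (S - A)" by (auto simp: D_def \<A>_def cycx_def)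
      note g = glue_props[OF S d(2) d(3) d(4) d(5) d(6)]
      show "h' (h d) = d" using g by (simp add: d h_def h'_def)
    qed
    show "\<forall>\<sigma>\<in>{\<sigma>. \<sigma> permutes S}. h (h' \<sigma>) = \<sigma>"
      using restrict_props[OF S _ x] by (auto simp: h_def h'_def)
    show "h ` D \<subseteq> {\<sigma>. \<sigma> permutes S}"
    proof
      fix \<sigma> assume "\<sigma> \<in> h ` D"
      then obtain A \<tau> \<rho> where d: "\<sigma> = glue A \<tau> \<rho>" "x \<in> A" "A \<subseteq> S" "\<tau> permutes A" "orbit \<tau> x = A"
        "\<rho> permutes (S - A)" by (auto simp: D_def \<A>_def cycx_def h_def)
      then show "\<sigma> \<in> {\<sigma>. \<sigma> permutes S}" using glue_props(1)[OF S d(2) d(3) d(4) d(5) d(6)] by simp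
    qed
    show "h' ` {\<sigma>. \<sigma> permutes S} \<subseteq> D"
    proof
      fix d assume "d \<in> h' ` {\<sigma>. \<sigma> permutes S}"
      then obtain \<sigma> where \<sigma>: "\<sigma> permutes S" "d = h' \<sigma>" by auto
      note r = restrict_props[OF S \<sigma>(1) x]
      show "d \<in> D" using r by (simp add: \<sigma>(2) h'_def D_def \<A>_def cycx_def)
    qed
  qed
  have "(\<Sum>\<sigma>\<in>{\<sigma>. \<sigma> permutes S}. F \<sigma>) = (\<Sum>d\<in>D. F (h d))"
    by (rule sum.reindex_bij_betw[OF bij, symmetric])
  also have "\<dots> = (\<Sum>(A, p)\<in>D. F (h (A, p)))" by simp
  also have "\<dots> = (\<Sum>A\<in>\<A>. \<Sum>p\<in>cycx A x \<times> {\<rho>. \<rho> permutes (S - A)}. F (h (A, p)))"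
    unfolding D_def
  proof (rule sum.Sigma[symmetric])
    show "finite \<A>" by (rule finA)
    show "\<forall>A\<in>\<A>. finite (cycx A x \<times> {\<rho>. \<rho> permutes S - A})"
    proof
      fix A assume "A \<in> \<A>"
      then have "finite A" using S by (auto simp: \<A>_def finite_subset)
      then show "finite (cycx A x \<times> {\<rho>. \<rho> permutes S - A})"
        using S by (intro finite_cartesian_product finite_cycx finite_permutations) auto
    qed
  qed
  also have "\<dots> = (\<Sum>A\<in>\<A>. \<Sum>\<tau>\<in>cycx A x. \<Sum>\<rho>\<in>{\<rho>. \<rho> permutes (S - A)}. F (glue A \<tau> \<rho>))"
    by (rule sum.cong[OF refl], subst sum.cartesian_product) (simp add: h_def split_def)
  finally show ?thesis by (simp add: \<A>_def)
qed

lemma card_subsets_containing: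
  assumes S: "finite S" and x: "x \<in> S" and l: "l \<ge> 1"
  shows "card {A. x \<in> A \<and> A \<subseteq> S \<and> card A = l} = (card S - 1) choose (l - 1)"
proof -
  have "bij_betw (\<lambda>A. A - {x}) {A. x \<in> A \<and> A \<subseteq> S \<and> card A = l} {B. B \<subseteq> S - {x} \<and> card B = l - 1}"
  proof (rule bij_betw_byWitness[where f' = "insert x"])
    show "\<forall>A\<in>{A. x \<in> A \<and> A \<subseteq> S \<and> card A = l}. insert x (A - {x}) = A" by auto
    show "\<forall>B\<in>{B. B \<subseteq> S - {x} \<and> card B = l - 1}. insert x B - {x} = B" by auto
    show "(\<lambda>A. A - {x}) ` {A. x \<in> A \<and> A \<subseteq> S \<and> card A = l} \<subseteq> {B. B \<subseteq> S - {x} \<and> card B = l - 1}"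
      using S by (auto simp: finite_subset)
    show "insert x ` {B. B \<subseteq> S - {x} \<and> card B = l - 1} \<subseteq> {A. x \<in> A \<and> A \<subseteq> S \<and> card A = l}"
    proof
      fix A assume "A \<in> insert x ` {B. B \<subseteq> S - {x} \<and> card B = l - 1}"
      then obtain B where B: "A = insert x B" "B \<subseteq> S - {x}" "card B = l - 1" by auto
      have "finite B" using B(2) S finite_subset by blast
      then have "card A = Suc (l - 1)" using B by (simp add: subset_Diff_insert)
      then show "A \<in> {A. x \<in> A \<and> A \<subseteq> S \<and> card A = l}" using B x l by auto
    qed
  qed
  then have "card {A. x \<in> A \<and> A \<subseteq> S \<and> card A = l} = card {B. B \<subseteq> S - {x} \<and> card B = l - 1}"
    by (rule bij_betw_same_card)
  also have "\<dots> = card (S - {x}) choose (l - 1)" using S by (simp add: n_subsets)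
  finally show ?thesis using S x by simp
qed

definition Tn :: "nat \<Rightarrow> (nat multiset \<Rightarrow> real) \<Rightarrow> real" where
  "Tn n G = (\<Sum>\<sigma>\<in>{\<sigma>. \<sigma> permutes {1..n}}. G (mct {1..n} \<sigma>))"

lemma step_sum:
  fixes F :: "nat \<Rightarrow> nat multiset \<Rightarrow> real"
  assumes S: "finite S" and x: "x \<in> S"
    and IH: "\<And>S' G. finite S' \<Longrightarrow> card S' < card S \<Longrightarrow> (\<Sum>\<sigma>\<in>{\<sigma>. \<sigma> permutes S'}. G (mct S' \<sigma>)) = Tn (card S') G"
  shows "(\<Sum>\<sigma>\<in>{\<sigma>. \<sigma> permutes S}. F (card (orbit \<sigma> x)) (mct S \<sigma>)) =
    (\<Sum>l\<in>{1..card S}. real ((card S - 1) choose (l - 1)) * fact (l - 1) * Tn (card S - l) (\<lambda>M. F l (add_mset l M)))"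
proof -
  define n where "n = card S"
  define \<A> where "\<A> = {A. x \<in> A \<and> A \<subseteq> S}"
  define hh where "hh l = fact (l - 1) * Tn (n - l) (\<lambda>M. F l (add_mset l M))" for l
  have finA: "finite \<A>" unfolding \<A>_def by (rule finite_subset[of _ "Pow S"]) (use S in auto)
  have "(\<Sum>\<sigma>\<in>{\<sigma>. \<sigma> permutes S}. F (card (orbit \<sigma> x)) (mct S \<sigma>)) =
    (\<Sum>A\<in>\<A>. \<Sum>\<tau>\<in>cycx A x. \<Sum>\<rho>\<in>{\<rho>. \<rho> permutes (S - A)}. F (card (orbit (glue A \<tau> \<rho>) x)) (mct S (glue A \<tau> \<rho>)))"
    unfolding \<A>_def by (rule decomp_sum[OF S x])
  also have "\<dots> = (\<Sum>A\<in>\<A>. hh (card A))"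
  proof (rule sum.cong[OF refl])
    fix A assume A: "A \<in> \<A>"
    then have xA: "x \<in> A" and AS: "A \<subseteq> S" by (auto simp: \<A>_def)
    have cSA: "card (S - A) = n - card A" using AS S by (simp add: card_Diff_subset finite_subset n_def)
    have lt: "card (S - A) < card S"
      using xA AS S by (intro psubset_card_mono) auto
    have "(\<Sum>\<tau>\<in>cycx A x. \<Sum>\<rho>\<in>{\<rho>. \<rho> permutes (S - A)}. F (card (orbit (glue A \<tau> \<rho>) x)) (mct S (glue A \<tau> \<rho>)))
       = (\<Sum>\<tau>\<in>cycx A x. \<Sum>\<rho>\<in>{\<rho>. \<rho> permutes (S - A)}. F (card A) (add_mset (card A) (mct (S - A) \<rho>)))"
    proof (intro sum.cong refl)
      fix \<tau> \<rho> assume \<tau>: "\<tau> \<in> cycx A x" and \<rho>: "\<rho> \<in> {\<rho>. \<rho> permutes (S - A)}"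
      note g = glue_props[OF S xA AS, of \<tau> \<rho>]
      have "mct S (glue A \<tau> \<rho>) = add_mset (card A) (mct (S - A) \<rho>)"
        using g \<tau> \<rho> S by (simp add: cycx_def mct_def finite_cyc)
      then show "F (card (orbit (glue A \<tau> \<rho>) x)) (mct S (glue A \<tau> \<rho>)) = F (card A) (add_mset (card A) (mct (S - A) \<rho>))"
        using g \<tau> \<rho> by (simp add: cycx_def)
    qed
    also have "\<dots> = (\<Sum>\<tau>\<in>cycx A x. Tn (n - card A) (\<lambda>M. F (card A) (add_mset (card A) M)))"
      using IH[of "S - A" "\<lambda>M. F (card A) (add_mset (card A) M)"] S lt cSA by simp
    also have "\<dots> = hh (card A)"
      using card_cycx[of A x] finite_subset[OF AS S] xA by (simp add: hh_def)
    finally show "(\<Sum>\<tau>\<in>cycx A x. \<Sum>\<rho>\<in>{\<rho>. \<rho> permutes (S - A)}. F (card (orbit (glue A \<tau> \<rho>) x)) (mct S (glue A \<tau> \<rho>))) = hh (card A)" .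
  qed
  also have "\<dots> = (\<Sum>l\<in>{1..n}. \<Sum>A\<in>{A\<in>\<A>. card A = l}. hh (card A))"
  proof (rule sum.group[symmetric, OF finA])
    show "finite {1..n}" by simp
    show "card ` \<A> \<subseteq> {1..n}"
    proof
      fix l assume "l \<in> card ` \<A>"
      then obtain A where A: "A \<in> \<A>" "l = card A" by auto
      then have "A \<noteq> {}" "A \<subseteq> S" by (auto simp: \<A>_def)
      then show "l \<in> {1..n}" using A S by (auto simp: n_def card_mono finite_subset Suc_le_eq card_gt_0_iff)
    qed
  qed
  also have "\<dots> = (\<Sum>l\<in>{1..n}. real ((n - 1) choose (l - 1)) * hh l)"
  proof (rule sum.cong[OF refl])
    fix l assume l: "l \<in> {1..n}"
    have eqs: "{A\<in>\<A>. card A = l} = {A. x \<in> A \<and> A \<subseteq> S \<and> card A = l}" by (auto simp: \<A>_def)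
    have "(\<Sum>A\<in>{A\<in>\<A>. card A = l}. hh (card A)) = (\<Sum>A\<in>{A\<in>\<A>. card A = l}. hh l)" by simp
    also have "\<dots> = real (card {A\<in>\<A>. card A = l}) * hh l" by simp
    finally show "(\<Sum>A\<in>{A\<in>\<A>. card A = l}. hh (card A)) = real ((n - 1) choose (l - 1)) * hh l"
      using card_subsets_containing[OF S x, of l] l by (simp add: n_def eqs)
  qed
  finally show ?thesis by (simp add: n_def hh_def mult.assoc)
qed

lemma main_sum:
  fixes G :: "nat multiset \<Rightarrow> real"
  assumes "finite S"
  shows "(\<Sum>\<sigma>\<in>{\<sigma>. \<sigma> permutes S}. G (mct S \<sigma>)) = Tn (card S) G"
  using assms
proof (induction "card S" arbitrary: S G rule: less_induct)
  case less
  show ?case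
  proof (cases "S = {}")
    case True then show ?thesis by (simp add: Tn_def)
  next
    case False
    then obtain x where x: "x \<in> S" by auto
    define n where "n = card S"
    have n1: "n \<ge> 1" using less.prems x by (simp add: n_def Suc_le_eq card_gt_0_iff) blast
    have IH: "\<And>S' G. finite S' \<Longrightarrow> card S' < card S \<Longrightarrow> (\<Sum>\<sigma>\<in>{\<sigma>. \<sigma> permutes S'}. G (mct S' \<sigma>)) = Tn (card S') G"
      using less.hyps by blast
    have 1: "(\<Sum>\<sigma>\<in>{\<sigma>. \<sigma> permutes S}. G (mct S \<sigma>)) =
      (\<Sum>l\<in>{1..n}. real ((n - 1) choose (l - 1)) * fact (l - 1) * Tn (n - l) (\<lambda>M. G (add_mset l M)))"
      using step_sum[OF less.prems x IH, of "\<lambda>_ M. G M"] by (simp add: n_def)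
    have IH': "\<And>S' G. finite S' \<Longrightarrow> card S' < card {1..n} \<Longrightarrow> (\<Sum>\<sigma>\<in>{\<sigma>. \<sigma> permutes S'}. G (mct S' \<sigma>)) = Tn (card S') G"
      using less.hyps by (simp add: n_def)
    have 2: "(\<Sum>\<sigma>\<in>{\<sigma>. \<sigma> permutes {1..n}}. G (mct {1..n} \<sigma>)) =
      (\<Sum>l\<in>{1..n}. real ((n - 1) choose (l - 1)) * fact (l - 1) * Tn (n - l) (\<lambda>M. G (add_mset l M)))"
      using step_sum[where S="{1..n}" and x=1 and F="\<lambda>_ M. G M", OF _ _ IH'] n1 by simp
    show ?thesis using 1 2 by (simp add: Tn_def n_def)
  qed
qed




definition conv :: "(nat \<Rightarrow> real) \<Rightarrow> (nat \<Rightarrow> real) \<Rightarrow> nat \<Rightarrow> real" where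
  "conv u v n = (\<Sum>i\<le>n. u i * v (n - i))"

lemma seq_shift_tendsto:
  assumes "(g \<longlongrightarrow> (L::real)) sequentially"
  shows "((\<lambda>n. g (n - k)) \<longlongrightarrow> L) sequentially"
  using filterlim_compose[OF assms filterlim_minus_const_nat_at_top] by (simp add: o_def)


definition pw :: "(nat \<Rightarrow> real) \<Rightarrow> nat \<Rightarrow> nat \<Rightarrow> real" where
  "pw b m n = fps_nth (Abs_fps b ^ m) n"

definition Eb :: "(nat \<Rightarrow> real) \<Rightarrow> nat \<Rightarrow> real" where
  "Eb b n = (\<Sum>m\<le>n. pw b m n / fact m)"

lemma pw_Suc: "pw b (Suc m) n = conv b (pw b m) n"
  by (simp add: pw_def conv_def fps_mult_nth atLeast0AtMost)

lemma pw_Suc_fun: "pw b (Suc m) = conv b (pw b m)"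
  using pw_Suc by blast

lemma pw_0: "pw b 0 n = (if n = 0 then 1 else 0)"
  by (simp add: pw_def)

lemma pw_at0: "b 0 = 0 \<Longrightarrow> pw b m 0 = (if m = 0 then 1 else 0)"
  by (simp add: pw_def fps_nth_power_0)

lemma pw_vanish: "b 0 = 0 \<Longrightarrow> n < m \<Longrightarrow> pw b m n = 0"
proof (induction m arbitrary: n)
  case 0 then show ?case by simp
next
  case (Suc m)
  have "pw b (Suc m) n = (\<Sum>i\<le>n. b i * pw b m (n - i))" by (simp add: pw_Suc conv_def)
  also have "\<dots> = 0"
  proof (rule sum.neutral, intro ballI)
    fix i assume "i \<in> {..n}"
    show "b i * pw b m (n - i) = 0"
    proof (cases "i = 0")
      case True then show ?thesis using Suc.prems by simp
    next
      case False then have "n - i < m" using Suc.prems \<open>i \<in> {..n}\<close> by auto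
      then show ?thesis using Suc.IH Suc.prems by simp
    qed
  qed
  finally show ?case .
qed

lemma pw_nonneg: "(\<And>j. b j \<ge> 0) \<Longrightarrow> pw b m n \<ge> 0"
proof (induction m arbitrary: n)
  case 0 then show ?case by (simp add: pw_0)
next
  case (Suc m) then show ?case by (simp add: pw_Suc conv_def sum_nonneg)
qed

lemma pw_deriv:
  assumes "m \<ge> 1"
  shows "real n * pw b m n = real m * (\<Sum>l\<in>{1..n}. real l * b l * pw b (m-1) (n-l))"
proof (cases n)
  case 0 then show ?thesis by simp
next
  case (Suc k)
  have "fps_nth (fps_deriv (Abs_fps b ^ m)) k = fps_nth (of_nat m * fps_deriv (Abs_fps b) * Abs_fps b ^ (m - 1)) k"
    by (simp only: fps_deriv_power')
  also have "\<dots> = real m * fps_nth (fps_deriv (Abs_fps b) * Abs_fps b ^ (m - 1)) k"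
    by (simp add: fps_of_nat mult.assoc)
  also have "\<dots> = real m * (\<Sum>i=0..k. real (Suc i) * b (Suc i) * pw b (m-1) (k - i))"
    by (simp add: fps_mult_nth pw_def)
  also have "(\<Sum>i=0..k. real (Suc i) * b (Suc i) * pw b (m-1) (k - i)) = (\<Sum>l\<in>{1..n}. real l * b l * pw b (m-1) (n-l))"
    unfolding Suc by (rule sum.reindex_bij_witness[of _ "\<lambda>l. l - 1" "Suc"]) auto
  finally show ?thesis using Suc by (simp add: pw_def)
qed

lemma Eb_ext: "b 0 = 0 \<Longrightarrow> n \<le> N \<Longrightarrow> Eb b n = (\<Sum>m\<le>N. pw b m n / fact m)"
  unfolding Eb_def by (rule sum.mono_neutral_left) (auto simp: pw_vanish)

lemma Eb_0: "b 0 = 0 \<Longrightarrow> Eb b 0 = 1"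
  by (simp add: Eb_def pw_0)

lemma Eb_nonneg: "(\<And>j. b j \<ge> 0) \<Longrightarrow> Eb b n \<ge> 0"
  unfolding Eb_def by (intro sum_nonneg divide_nonneg_pos pw_nonneg) auto

lemma Eb_rec:
  assumes b0: "b 0 = 0"
  shows "real n * Eb b n = (\<Sum>l\<in>{1..n}. real l * b l * Eb b (n - l))"
proof (cases "n = 0")
  case True then show ?thesis by simp
next
  case False
  have "real n * Eb b n = (\<Sum>m\<le>n. real n * pw b m n / fact m)"
    by (simp add: Eb_def sum_distrib_left)
  also have "\<dots> = (\<Sum>m\<in>{1..n}. real n * pw b m n / fact m)"
  proof (rule sum.mono_neutral_right)
    show "\<forall>i\<in>{..n} - {1..n}. real n * pw b i n / fact i = 0"
    proof
      fix i assume "i \<in> {..n} - {1..n}"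
      then have "i = 0" by auto
      then show "real n * pw b i n / fact i = 0" using False by (simp add: pw_0)
    qed
  qed auto
  also have "\<dots> = (\<Sum>m\<in>{1..n}. \<Sum>l\<in>{1..n}. real l * b l * (pw b (m-1) (n-l) / fact (m-1)))"
  proof (rule sum.cong[OF refl])
    fix m assume m: "m \<in> {1..n}"
    have fm: "fact m = real m * fact (m-1)" using m by (metis atLeastAtMost_iff fact_nonzero fact_num_eq_if of_nat_eq_0_iff not_one_le_zero)
    have "real n * pw b m n / fact m = real m * (\<Sum>l\<in>{1..n}. real l * b l * pw b (m-1) (n-l)) / fact m"
      using pw_deriv[of m n b] m by simp
    also have "\<dots> = (\<Sum>l\<in>{1..n}. real l * b l * pw b (m-1) (n-l)) / fact (m-1)"
      using m unfolding fm by simp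
    also have "\<dots> = (\<Sum>l\<in>{1..n}. real l * b l * (pw b (m-1) (n-l) / fact (m-1)))"
      by (simp add: sum_divide_distrib)
    finally show "real n * pw b m n / fact m = (\<Sum>l\<in>{1..n}. real l * b l * (pw b (m-1) (n-l) / fact (m-1)))" .
  qed
  also have "\<dots> = (\<Sum>l\<in>{1..n}. real l * b l * (\<Sum>m\<in>{1..n}. pw b (m-1) (n-l) / fact (m-1)))"
    by (subst sum.swap) (simp add: sum_distrib_left)
  also have "\<dots> = (\<Sum>l\<in>{1..n}. real l * b l * Eb b (n - l))"
  proof (rule sum.cong[OF refl])
    fix l assume l: "l \<in> {1..n}"
    have "(\<Sum>m\<in>{1..n}. pw b (m-1) (n-l) / fact (m-1)) = (\<Sum>m\<le>n-1. pw b m (n-l) / fact m)"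
      by (rule sum.reindex_bij_witness[of _ "Suc" "\<lambda>m. m - 1"]) (use False in auto)
    also have "\<dots> = Eb b (n-l)" using l by (intro Eb_ext[symmetric] b0) auto
    finally show "real l * b l * (\<Sum>m\<in>{1..n}. pw b (m-1) (n-l) / fact (m-1)) = real l * b l * Eb b (n - l)" by simp
  qed
  finally show ?thesis .
qed

locale wseq =
  fixes a d :: "nat \<Rightarrow> real"
  assumes a0: "a 0 = 0" and apos: "\<And>n. n \<ge> 1 \<Longrightarrow> a n > 0" and asum: "summable a"
  and dsum: "summable d" and dnn: "\<And>j. d j \<ge> 0"
  and abound: "\<And>j n. 1 \<le> j \<Longrightarrow> 2*j \<le> n \<Longrightarrow> a j * a (n-j) / a n \<le> d j"
  and ashift: "\<And>s. (\<lambda>n. a (n - s) / a n) \<longlonglongrightarrow> 1"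
begin

definition domd :: "(nat \<Rightarrow> real) \<Rightarrow> real \<Rightarrow> bool" where
  "domd u C \<longleftrightarrow> (\<forall>n\<ge>1. \<bar>u n\<bar> \<le> C * a n)"

lemma domd_C: "domd u C \<Longrightarrow> C \<ge> 0"
proof -
  assume "domd u C"
  then have "\<bar>u 1\<bar> \<le> C * a 1" by (simp add: domd_def)
  moreover have "a 1 > 0" using apos by simp
  ultimately show ?thesis
  proof (cases "C \<ge> 0")
    case False
    then have "C * a 1 < 0" using \<open>a 1 > 0\<close> by (simp add: mult_neg_pos)
    then show ?thesis using \<open>\<bar>u 1\<bar> \<le> C * a 1\<close> by linarith
  qed
qed

lemma domd_mono: "domd u C \<Longrightarrow> C \<le> C' \<Longrightarrow> domd u C'"
proof -
  assume h: "domd u C" "C \<le> C'"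
  show ?thesis unfolding domd_def
  proof (intro allI impI)
    fix n :: nat assume "n \<ge> 1"
    then have "\<bar>u n\<bar> \<le> C * a n" "a n > 0" using h apos by (auto simp: domd_def)
    moreover have "C * a n \<le> C' * a n" using h(2) \<open>a n > 0\<close> by (simp add: mult_right_mono)
    ultimately show "\<bar>u n\<bar> \<le> C' * a n" by linarith
  qed
qed

lemma domd_quot: "domd u C \<Longrightarrow> \<bar>u n / a n\<bar> \<le> C"
proof -
  assume h: "domd u C"
  show ?thesis
  proof (cases "n = 0")
    case True then show ?thesis using domd_C[OF h] a0 by simp
  next
    case False
    then have "a n > 0" using apos by simp
    moreover have "\<bar>u n\<bar> \<le> C * a n" using h False by (simp add: domd_def)
    ultimately show ?thesis by (simp add: abs_divide pos_divide_le_eq)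
  qed
qed

lemma domd_summable: "domd u C \<Longrightarrow> summable (\<lambda>n. \<bar>u n\<bar>)"
proof -
  assume h: "domd u C"
  have "summable (\<lambda>n. C * a n)" using asum by (rule summable_mult)
  moreover have "eventually (\<lambda>n. norm \<bar>u n\<bar> \<le> C * a n) sequentially"
    using h unfolding domd_def eventually_sequentially by auto
  ultimately show ?thesis by (rule summable_comparison_test_ev[rotated])
qed

lemma domd_summable': "domd u C \<Longrightarrow> summable u"
  using domd_summable summable_rabs_cancel by blast

lemma half:
  assumes du: "domd u Cu" and dv: "domd v Cv" and lv: "(\<lambda>n. v n / a n) \<longlonglongrightarrow> V"
    and P: "\<And>n i. P n i \<Longrightarrow> 2*i \<le> n" and ev: "\<And>i. eventually (\<lambda>n. P n i) sequentially"
  shows "(\<lambda>n. \<Sum>i\<in>{i. i \<le> n \<and> P n i}. u i * v (n-i) / a n) \<longlonglongrightarrow> V * suminf u"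
proof -
  define f where "f k n = (if P n k then u k * v (n-k) / a n else 0)" for k n
  define M where "M k = (if k = 0 then \<bar>u 0\<bar> * Cv else Cu * Cv * d k)" for k
  have Cu: "Cu \<ge> 0" and Cv: "Cv \<ge> 0" using domd_C du dv by auto
  have lim: "(\<lambda>n. f k n) \<longlonglongrightarrow> u k * V" for k
  proof -
    have "(\<lambda>n. u k * (v (n-k) / a (n-k)) * (a (n-k) / a n)) \<longlonglongrightarrow> u k * V * 1"
      by (intro tendsto_mult tendsto_const seq_shift_tendsto[OF lv] ashift)
    moreover have "eventually (\<lambda>n. u k * (v (n-k) / a (n-k)) * (a (n-k) / a n) = f k n) sequentially"
    proof -
      have "eventually (\<lambda>n. n \<ge> k + 1) sequentially" by (rule eventually_ge_at_top)
      then show ?thesis using ev[of k]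
      proof eventually_elim
        case (elim n)
        then have "a (n - k) > 0" using apos by simp
        then show ?case using elim by (simp add: f_def)
      qed
    qed
    ultimately show ?thesis by (simp add: tendsto_cong)
  qed
  have bound: "norm (f k n) \<le> M k" for k n
  proof (cases "P n k")
    case False then show ?thesis using Cu Cv dnn by (simp add: f_def M_def)
  next
    case True
    show ?thesis
    proof (cases "k = 0")
      case True
      have "\<bar>u 0 * v n / a n\<bar> = \<bar>u 0\<bar> * \<bar>v n / a n\<bar>" by (simp add: abs_mult)
      also have "\<dots> \<le> \<bar>u 0\<bar> * Cv" by (intro mult_left_mono domd_quot dv) auto
      finally show ?thesis using True \<open>P n k\<close> by (simp add: f_def M_def)
    next
      case False
      have k1: "k \<ge> 1" using False by simp
      have kn: "2*k \<le> n" using P[OF True] .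
      have ank: "a (n-k) > 0" "a n > 0" "a k > 0" using apos kn k1 by auto
      have "\<bar>u k\<bar> \<le> Cu * a k" using du k1 by (simp add: domd_def)
      moreover have "\<bar>v (n-k)\<bar> \<le> Cv * a (n-k)" using dv kn k1 by (simp add: domd_def)
      ultimately have "\<bar>u k\<bar> * \<bar>v (n-k)\<bar> \<le> (Cu * a k) * (Cv * a (n-k))"
        by (intro mult_mono) auto
      note * = this
      have "\<bar>u k * v (n-k) / a n\<bar> = (\<bar>u k\<bar> * \<bar>v (n-k)\<bar>) / a n"
        using ank by (simp add: abs_mult)
      also have "\<dots> \<le> ((Cu * a k) * (Cv * a (n-k))) / a n"
        by (rule divide_right_mono) (use * ank in auto)
      also have "\<dots> = (Cu * Cv) * (a k * a (n-k) / a n)" by simp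
      also have "\<dots> \<le> (Cu * Cv) * d k"
        by (intro mult_left_mono abound k1 kn) (use Cu Cv in auto)
      finally show ?thesis using False True by (simp add: f_def M_def)
    qed
  qed
  have sM: "summable M"
  proof -
    have "summable (\<lambda>k. Cu * Cv * d k)" using dsum by (rule summable_mult)
    then have "summable (\<lambda>k. Cu * Cv * d (Suc k))" by (subst summable_Suc_iff)
    then have "summable (\<lambda>k. M (Suc k))" by (simp add: M_def)
    then show ?thesis by (subst (asm) summable_Suc_iff)
  qed
  have T: "(\<lambda>n. suminf (\<lambda>k. f k n)) \<longlonglongrightarrow> suminf (\<lambda>k. u k * V)"
  proof -
    have "\<forall>\<^sub>F (k,n) in sequentially \<times>\<^sub>F sequentially. norm (f k n) \<le> M k"
      by (rule always_eventually) (use bound in auto)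
    from tannerys_theorem[OF lim this sM] show ?thesis by simp
  qed
  have eq: "suminf (\<lambda>k. f k n) = (\<Sum>i\<in>{i. i \<le> n \<and> P n i}. u i * v (n-i) / a n)" for n
  proof -
    have "suminf (\<lambda>k. f k n) = sum (\<lambda>k. f k n) {i. i \<le> n \<and> P n i}"
      by (rule suminf_finite) (auto simp: f_def dest: P)
    also have "\<dots> = (\<Sum>i\<in>{i. i \<le> n \<and> P n i}. u i * v (n-i) / a n)"
      by (rule sum.cong) (auto simp: f_def)
    finally show ?thesis .
  qed
  have "suminf (\<lambda>k. u k * V) = V * suminf u"
    using suminf_mult2[OF domd_summable'[OF du], of V] by (simp add: mult_ac)
  then show ?thesis using T eq by simp
qed


lemma conv_split:
  "conv u v n = (\<Sum>i\<in>{i. i \<le> n \<and> 2*i \<le> n}. u i * v (n-i)) + (\<Sum>j\<in>{j. j \<le> n \<and> 2*j < n}. v j * u (n-j))"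
proof -
  have "{..n} = {i. i \<le> n \<and> 2*i \<le> n} \<union> {i. i \<le> n \<and> \<not> 2*i \<le> n}" by auto
  then have "conv u v n = (\<Sum>i\<in>{i. i \<le> n \<and> 2*i \<le> n}. u i * v (n-i)) + (\<Sum>i\<in>{i. i \<le> n \<and> \<not> 2*i \<le> n}. u i * v (n-i))"
    unfolding conv_def by (subst sum.union_disjoint[symmetric]) auto
  also have "(\<Sum>i\<in>{i. i \<le> n \<and> \<not> 2*i \<le> n}. u i * v (n-i)) = (\<Sum>j\<in>{j. j \<le> n \<and> 2*j < n}. v j * u (n-j))"
    by (rule sum.reindex_bij_witness[of _ "\<lambda>i. n - i" "\<lambda>j. n - j"]) auto
  finally show ?thesis .
qed

lemma conv_lim:
  assumes du: "domd u Cu" and dv: "domd v Cv" and lu: "(\<lambda>n. u n / a n) \<longlonglongrightarrow> U"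
    and lv: "(\<lambda>n. v n / a n) \<longlonglongrightarrow> V"
  shows "(\<lambda>n. conv u v n / a n) \<longlonglongrightarrow> V * suminf u + U * suminf v"
proof -
  have 1: "(\<lambda>n. \<Sum>i\<in>{i. i \<le> n \<and> 2*i \<le> n}. u i * v (n-i) / a n) \<longlonglongrightarrow> V * suminf u"
    by (rule half[OF du dv lv]) (auto intro: eventually_ge_at_top)
  have 2: "(\<lambda>n. \<Sum>i\<in>{i. i \<le> n \<and> 2*i < n}. v i * u (n-i) / a n) \<longlonglongrightarrow> U * suminf v"
    by (rule half[OF dv du lu]) (auto intro: eventually_gt_at_top)
  have "conv u v n / a n = (\<Sum>i\<in>{i. i \<le> n \<and> 2*i \<le> n}. u i * v (n-i) / a n) + (\<Sum>i\<in>{i. i \<le> n \<and> 2*i < n}. v i * u (n-i) / a n)" for n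
    by (simp add: conv_split add_divide_distrib sum_divide_distrib)
  then show ?thesis using tendsto_add[OF 1 2] by simp
qed

lemma domd_a: "domd a 1"
  unfolding domd_def using apos by (auto simp: less_imp_le)

lemma lim_a: "(\<lambda>n. a n / a n) \<longlonglongrightarrow> 1"
proof -
  have "eventually (\<lambda>n. a n / a n = 1) sequentially"
    using eventually_ge_at_top[of 1] by eventually_elim (use apos in force)
  then show ?thesis by (rule tendsto_eventually)
qed

lemma conv_aa: "\<exists>D\<ge>0. \<forall>n\<ge>1. conv a a n \<le> D * a n"
proof -
  have "convergent (\<lambda>n. conv a a n / a n)"
    using conv_lim[OF domd_a domd_a lim_a lim_a] by (auto simp: convergent_def)
  then have "Bseq (\<lambda>n. conv a a n / a n)" by (rule convergent_imp_Bseq)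
  then obtain K where K: "K > 0" "\<And>n. norm (conv a a n / a n) \<le> K" by (auto simp: Bseq_def)
  show ?thesis
  proof (intro exI[of _ K] conjI allI impI)
    fix n :: nat assume "n \<ge> 1"
    then have "a n > 0" using apos by simp
    have "conv a a n / a n \<le> K" using K(2)[of n] by (simp del: abs_divide)
    then show "conv a a n \<le> K * a n" using \<open>a n > 0\<close> by (simp add: pos_divide_le_eq)
  qed (use K in auto)
qed

lemma conv_dom:
  assumes du: "domd u Cu" and dv: "domd v Cv" and D: "\<And>n. n \<ge> 1 \<Longrightarrow> conv a a n \<le> D * a n"
  shows "domd (conv u v) (\<bar>u 0\<bar> * Cv + \<bar>v 0\<bar> * Cu + Cu * Cv * D)"
  unfolding domd_def
proof (intro allI impI)
  fix n :: nat assume n: "n \<ge> 1"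
  have Cu: "Cu \<ge> 0" and Cv: "Cv \<ge> 0" using domd_C du dv by auto
  have an: "a n > 0" using apos n by simp
  have set: "{..n} = insert 0 (insert n {1..<n})" using n by auto
  have cv: "conv u v n = u 0 * v n + u n * v 0 + (\<Sum>i\<in>{1..<n}. u i * v (n-i))"
    unfolding conv_def set using n by (simp add: add.assoc)
  have ca: "conv a a n = (\<Sum>i\<in>{1..<n}. a i * a (n-i))"
    unfolding conv_def set using n a0 by simp
  have "\<bar>\<Sum>i\<in>{1..<n}. u i * v (n-i)\<bar> \<le> (\<Sum>i\<in>{1..<n}. \<bar>u i\<bar> * \<bar>v (n-i)\<bar>)"
    by (rule order_trans[OF sum_abs]) (simp add: abs_mult)
  also have "\<dots> \<le> (\<Sum>i\<in>{1..<n}. (Cu * a i) * (Cv * a (n-i)))"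
  proof (rule sum_mono)
    fix i assume i: "i \<in> {1..<n}"
    have "\<bar>u i\<bar> \<le> Cu * a i" using du i by (simp add: domd_def)
    moreover have "\<bar>v (n-i)\<bar> \<le> Cv * a (n-i)" using dv i unfolding domd_def by auto
    ultimately show "\<bar>u i\<bar> * \<bar>v (n-i)\<bar> \<le> (Cu * a i) * (Cv * a (n-i))"
      by (intro mult_mono) auto
  qed
  also have "\<dots> = Cu * Cv * conv a a n" unfolding ca by (simp add: sum_distrib_left mult_ac)
  also have "\<dots> \<le> Cu * Cv * (D * a n)" by (intro mult_left_mono D n) (use Cu Cv in auto)
  finally have 3: "\<bar>\<Sum>i\<in>{1..<n}. u i * v (n-i)\<bar> \<le> Cu * Cv * D * a n" by (simp add: mult_ac)
  have 1: "\<bar>u 0 * v n\<bar> \<le> \<bar>u 0\<bar> * Cv * a n"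
    using dv n by (simp add: domd_def abs_mult mult_left_mono mult.assoc)
  have 2: "\<bar>u n * v 0\<bar> \<le> \<bar>v 0\<bar> * Cu * a n"
  proof -
    have "\<bar>u n\<bar> \<le> Cu * a n" using du n by (simp add: domd_def)
    then have "\<bar>v 0\<bar> * \<bar>u n\<bar> \<le> \<bar>v 0\<bar> * (Cu * a n)" by (rule mult_left_mono) simp
    then show ?thesis by (simp add: abs_mult mult_ac)
  qed
  have "\<bar>conv u v n\<bar> \<le> \<bar>u 0 * v n\<bar> + \<bar>u n * v 0\<bar> + \<bar>\<Sum>i\<in>{1..<n}. u i * v (n-i)\<bar>"
    unfolding cv by linarith
  also have "\<dots> \<le> \<bar>u 0\<bar> * Cv * a n + \<bar>v 0\<bar> * Cu * a n + Cu * Cv * D * a n"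
    using 1 2 3 by linarith
  also have "\<dots> = (\<bar>u 0\<bar> * Cv + \<bar>v 0\<bar> * Cu + Cu * Cv * D) * a n" by (simp add: algebra_simps)
  finally show "\<bar>conv u v n\<bar> \<le> (\<bar>u 0\<bar> * Cv + \<bar>v 0\<bar> * Cu + Cu * Cv * D) * a n" .
qed


lemma pw_class:
  assumes db: "domd b Cb" and lb: "(\<lambda>n. b n / a n) \<longlonglongrightarrow> 1" and b0: "b 0 = 0"
  shows "\<exists>K\<ge>0. \<forall>m. domd (pw b m) (K^m) \<and> (\<lambda>n. pw b m n / a n) \<longlonglongrightarrow> real m * suminf b ^ (m-1)
            \<and> pw b m sums (suminf b ^ m)"
proof -
  obtain D where D: "D \<ge> 0" "\<And>n. n \<ge> 1 \<Longrightarrow> conv a a n \<le> D * a n" using conv_aa by blast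
  have Cb: "Cb \<ge> 0" using domd_C[OF db] .
  define K where "K = 1 + Cb + Cb * D"
  have K: "K \<ge> 1" "Cb \<le> K" "Cb * D \<le> K" "Cb + Cb * D \<le> K" using Cb D by (auto simp: K_def)
  have sb: "summable (\<lambda>n. \<bar>b n\<bar>)" using domd_summable[OF db] .
  have "domd (pw b m) (K^m) \<and> (\<lambda>n. pw b m n / a n) \<longlonglongrightarrow> real m * suminf b ^ (m-1)
            \<and> pw b m sums (suminf b ^ m)" for m
  proof (induction m)
    case 0
    have "domd (pw b 0) (K^0)" unfolding domd_def using apos by (auto simp: pw_0 less_imp_le)
    moreover have "(\<lambda>n. pw b 0 n / a n) = (\<lambda>n. 0)" using a0 by (auto simp: pw_0)
    moreover have "pw b 0 sums (suminf b ^ 0)"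
      using sums_single[of 0 "\<lambda>_. 1::real"] by (simp add: pw_0[abs_def])
    ultimately show ?case by simp
  next
    case (Suc m)
    have IH1: "domd (pw b m) (K^m)" and IH2: "(\<lambda>n. pw b m n / a n) \<longlonglongrightarrow> real m * suminf b ^ (m-1)"
      and IH3: "pw b m sums (suminf b ^ m)" using Suc by auto
    have dom1: "domd (conv b (pw b m)) (\<bar>b 0\<bar> * K^m + \<bar>pw b m 0\<bar> * Cb + Cb * K^m * D)"
      by (rule conv_dom[OF db IH1 D(2)])
    have "\<bar>b 0\<bar> * K^m + \<bar>pw b m 0\<bar> * Cb + Cb * K^m * D \<le> K^Suc m"
    proof (cases "m = 0")
      case True then show ?thesis using b0 K by (simp add: pw_0)
    next
      case False
      have "Cb * D * K^m \<le> K * K^m" using K by (intro mult_right_mono) auto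
      then show ?thesis using b0 False by (simp add: pw_at0 mult_ac)
    qed
    then have dom: "domd (pw b (Suc m)) (K^Suc m)" using dom1 domd_mono by (simp add: pw_Suc_fun)
    have "(\<lambda>n. conv b (pw b m) n / a n) \<longlonglongrightarrow> real m * suminf b ^ (m-1) * suminf b + 1 * suminf (pw b m)"
      by (rule conv_lim[OF db IH1 lb IH2])
    moreover have "real m * suminf b ^ (m-1) * suminf b + 1 * suminf (pw b m) = real (Suc m) * suminf b ^ (Suc m - 1)"
    proof -
      have "suminf (pw b m) = suminf b ^ m" using IH3 by (simp add: sums_iff)
      moreover have "real m * suminf b ^ (m-1) * suminf b = real m * suminf b ^ m"
        by (cases m) (auto simp: mult_ac)
      ultimately show ?thesis by (simp add: algebra_simps)
    qed
    ultimately have lim: "(\<lambda>n. pw b (Suc m) n / a n) \<longlonglongrightarrow> real (Suc m) * suminf b ^ (Suc m - 1)"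
      by (simp add: pw_Suc_fun)
    have "(\<lambda>k. \<Sum>i\<le>k. b i * pw b m (k - i)) sums ((\<Sum>k. b k) * (\<Sum>k. pw b m k))"
      by (rule Cauchy_product_sums) (use sb domd_summable[OF IH1] in auto)
    then have "pw b (Suc m) sums (suminf b ^ Suc m)"
      using IH3 by (simp add: pw_Suc_fun conv_def[abs_def] sums_iff)
    with dom lim show ?case by simp
  qed
  then show ?thesis using K by (intro exI[of _ K]) auto
qed

lemma exp_deriv_sums: "(\<lambda>m. real m * x ^ (m-1) / fact m) sums exp (x::real)"
proof -
  have "(\<lambda>j. x ^ j / fact j) sums exp x" using exp_converges[of x] by (simp add: divide_inverse_commute scaleR_conv_of_real)
  moreover have "real (Suc j) * x ^ (Suc j - 1) / fact (Suc j) = x ^ j / fact j" for j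
    by (simp add: divide_simps)
  ultimately have "(\<lambda>j. real (Suc j) * x ^ (Suc j - 1) / fact (Suc j)) sums exp x" by simp
  then show ?thesis by (subst (asm) sums_Suc_iff) simp
qed

lemma Eb_lim:
  assumes db: "domd b Cb" and lb: "(\<lambda>n. b n / a n) \<longlonglongrightarrow> 1" and b0: "b 0 = 0"
  shows "(\<lambda>n. Eb b n / a n) \<longlonglongrightarrow> exp (suminf b)"
proof -
  obtain K where K: "K \<ge> 0" "\<And>m. domd (pw b m) (K^m)"
    "\<And>m. (\<lambda>n. pw b m n / a n) \<longlonglongrightarrow> real m * suminf b ^ (m-1)"
    using pw_class[OF db lb b0] by blast
  define f where "f m n = pw b m n / a n / fact m" for m n
  have lim: "(\<lambda>n. f m n) \<longlonglongrightarrow> real m * suminf b ^ (m-1) / fact m" for m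
    unfolding f_def by (intro tendsto_divide K(3) tendsto_const) auto
  have bound: "norm (f m n) \<le> K^m / fact m" for m n
  proof -
    have "norm (f m n) = \<bar>pw b m n / a n\<bar> / fact m" unfolding f_def real_norm_def
      by (subst abs_divide) simp
    also have "\<dots> \<le> K^m / fact m" by (rule divide_right_mono[OF domd_quot[OF K(2)[of m]]]) simp
    finally show ?thesis .
  qed
  have sM: "summable (\<lambda>m. K^m / fact m)"
    using summable_exp[of K] by (simp add: divide_inverse_commute)
  have ev: "\<forall>\<^sub>F (k,n) in sequentially \<times>\<^sub>F sequentially. norm (f k n) \<le> K^k / fact k"
    by (rule always_eventually) (use bound in auto)
  have T: "(\<lambda>n. suminf (\<lambda>m. f m n)) \<longlonglongrightarrow> suminf (\<lambda>m. real m * suminf b ^ (m-1) / fact m)"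
    using tannerys_theorem[OF lim ev sM] by simp
  have "suminf (\<lambda>m. f m n) = Eb b n / a n" for n
  proof -
    have "suminf (\<lambda>m. f m n) = (\<Sum>m\<le>n. f m n)"
      by (rule suminf_finite) (auto simp: f_def pw_vanish b0)
    then show ?thesis by (simp add: Eb_def f_def sum_divide_distrib mult.commute)
  qed
  moreover have "suminf (\<lambda>m. real m * suminf b ^ (m-1) / fact m) = exp (suminf b)"
    using exp_deriv_sums by (simp add: sums_iff)
  ultimately show ?thesis using T by simp
qed

lemma Eb_sums:
  assumes db: "domd b Cb" and lb: "(\<lambda>n. b n / a n) \<longlonglongrightarrow> 1" and b0: "b 0 = 0"
    and bnn: "\<And>j. b j \<ge> 0"
  shows "Eb b sums exp (suminf b)"
proof -
  obtain K :: real where K: "K \<ge> 0" "\<And>m. pw b m sums (suminf b ^ m)"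
    using pw_class[OF db lb b0] by blast
  define f where "f m N = (\<Sum>n<N. pw b m n) / fact m" for m N
  have lim: "(\<lambda>N. f m N) \<longlonglongrightarrow> suminf b ^ m / fact m" for m
    unfolding f_def using K(2)[of m] by (intro tendsto_divide tendsto_const) (auto simp: sums_def)
  have bnd0: "suminf b \<ge> 0" using bnn domd_summable'[OF db] suminf_nonneg by blast
  have bound: "norm (f m N) \<le> suminf b ^ m / fact m" for m N
  proof -
    have "(\<Sum>n<N. pw b m n) \<le> suminf (pw b m)"
      by (rule sum_le_suminf) (use K(2)[of m] pw_nonneg[OF bnn] in \<open>auto simp: sums_iff\<close>)
    moreover have "(\<Sum>n<N. pw b m n) \<ge> 0" by (intro sum_nonneg pw_nonneg bnn)
    ultimately show ?thesis using K(2)[of m] by (simp add: f_def sums_iff divide_right_mono)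
  qed
  have sM: "summable (\<lambda>m. suminf b ^ m / fact m)"
    using summable_exp[of "suminf b"] by (simp add: divide_inverse_commute)
  have ev: "\<forall>\<^sub>F (k,n) in sequentially \<times>\<^sub>F sequentially. norm (f k n) \<le> suminf b ^ k / fact k"
    by (rule always_eventually) (use bound in auto)
  have T: "(\<lambda>N. suminf (\<lambda>m. f m N)) \<longlonglongrightarrow> suminf (\<lambda>m. suminf b ^ m / fact m)"
    using tannerys_theorem[OF lim ev sM] by simp
  have "suminf (\<lambda>m. f m N) = (\<Sum>n<N. Eb b n)" for N
  proof -
    have "suminf (\<lambda>m. f m N) = (\<Sum>m<N. f m N)"
      by (rule suminf_finite) (auto simp: f_def pw_vanish b0)
    also have "\<dots> = (\<Sum>m<N. \<Sum>n<N. pw b m n / fact m)" by (simp add: f_def sum_divide_distrib)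
    also have "\<dots> = (\<Sum>n<N. \<Sum>m<N. pw b m n / fact m)" by (rule sum.swap)
    also have "\<dots> = (\<Sum>n<N. Eb b n)"
    proof (rule sum.cong[OF refl])
      fix n assume "n \<in> {..<N}"
      then have "Eb b n = (\<Sum>m\<le>N - 1. pw b m n / fact m)" by (intro Eb_ext b0) auto
      also have "{..N-1} = {..<N}" using \<open>n \<in> {..<N}\<close> by auto
      finally show "(\<Sum>m<N. pw b m n / fact m) = Eb b n" by simp
    qed
    finally show ?thesis .
  qed
  moreover have "suminf (\<lambda>m. suminf b ^ m / fact m) = exp (suminf b)"
    using exp_converges[of "suminf b"] by (simp add: sums_iff divide_inverse_commute scaleR_conv_of_real)
  ultimately show ?thesis using T by (simp add: sums_def)
qed

end




definition Gth :: "(nat \<Rightarrow> real) \<Rightarrow> nat multiset \<Rightarrow> real" where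
  "Gth \<theta> M = prod_mset (image_mset \<theta> M)"

lemma Gth_add [simp]: "Gth \<theta> (add_mset l M) = \<theta> l * Gth \<theta> M"
  by (simp add: Gth_def)

lemma Gth_empty [simp]: "Gth \<theta> {#} = 1"
  by (simp add: Gth_def)

lemma cycles_of_cyc: "cycles_of n \<sigma> = cyc {1..n} \<sigma>"
  by (simp add: cycles_of_def cyc_def)

lemma count_image_card: "finite X \<Longrightarrow> count (image_mset card (mset_set X)) j = card {C\<in>X. card C = j}"
proof -
  assume X: "finite X"
  have "count (image_mset card (mset_set X)) j = (\<Sum>y\<in>card -` {j} \<inter> X. 1)"
    using X by (simp add: count_image_mset)
  also have "\<dots> = card (card -` {j} \<inter> X)" by simp
  also have "card -` {j} \<inter> X = {C\<in>X. card C = j}" by auto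
  finally show ?thesis .
qed

lemma Rcyc_mct: "Rcyc n j \<sigma> = count (mct {1..n} \<sigma>) j"
  by (simp add: Rcyc_def mct_def cycles_of_cyc count_image_card finite_cyc)

lemma Kcyc_mct: "Kcyc n \<sigma> = size (mct {1..n} \<sigma>)"
  by (simp add: Kcyc_def mct_def cycles_of_cyc)

lemma set_mct:
  assumes \<sigma>: "\<sigma> permutes {1..n}"
  shows "set_mset (mct {1..n} \<sigma>) \<subseteq> {1..n}"
proof
  fix j assume "j \<in># mct {1..n} \<sigma>"
  then obtain y where y: "y \<in> {1..n}" "j = card (orbit \<sigma> y)"
    using finite_cyc[of "{1..n}" \<sigma>] by (auto simp: mct_def cyc_def)
  have sub: "orbit \<sigma> y \<subseteq> {1..n}" by (rule permutes_orbit_subset[OF \<sigma> y(1)])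
  have ne: "orbit \<sigma> y \<noteq> {}" by (rule orbit_nonempty)
  have fin: "finite (orbit \<sigma> y)" using sub finite_subset by blast
  have "card (orbit \<sigma> y) \<le> n" using card_mono[OF _ sub] by simp
  moreover have "card (orbit \<sigma> y) \<ge> 1" using ne fin by (simp add: Suc_le_eq card_gt_0_iff)
  ultimately show "j \<in> {1..n}" using y by simp
qed

lemma prod_count_mset:
  fixes f :: "nat \<Rightarrow> real"
  assumes "set_mset M \<subseteq> J" "finite J"
  shows "(\<Prod>j\<in>J. f j ^ count M j) = prod_mset (image_mset f M)"
  using assms(1)
proof (induction M)
  case empty then show ?case by simp
next
  case (add x M)
  have xJ: "x \<in> J" using add.prems by simp
  have "(\<Prod>j\<in>J. f j ^ count (add_mset x M) j) = (\<Prod>j\<in>J. (if j = x then f j else 1) * f j ^ count M j)"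
    by (rule prod.cong) auto
  also have "\<dots> = (\<Prod>j\<in>J. (if j = x then f j else 1)) * (\<Prod>j\<in>J. f j ^ count M j)"
    by (rule prod.distrib)
  also have "(\<Prod>j\<in>J. (if j = x then f j else 1)) = f x"
    using xJ assms(2) by (simp add: prod.delta)
  finally show ?case using add by simp
qed

lemma wt_Gth: "\<sigma> permutes {1..n} \<Longrightarrow> wt \<theta> n \<sigma> = Gth \<theta> (mct {1..n} \<sigma>)"
  unfolding wt_def Gth_def Rcyc_mct by (rule prod_count_mset[OF set_mct]) auto

lemma Tn_Gth: "Tn n (Gth \<theta>) = fact n * hseq \<theta> n"
proof -
  have "Tn n (Gth \<theta>) = (\<Sum>\<sigma>\<in>perms n. wt \<theta> n \<sigma>)"
    unfolding Tn_def perms_def by (rule sum.cong) (auto simp: wt_Gth)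
  then show ?thesis by (simp add: hseq_def)
qed

lemma Pn_Tn:
  assumes "\<And>\<sigma>. \<sigma> permutes {1..n} \<Longrightarrow> E \<sigma> = E' (mct {1..n} \<sigma>)"
  shows "Pn \<theta> n E = Tn n (\<lambda>M. if E' M then Gth \<theta> M else 0) / (fact n * hseq \<theta> n)"
proof -
  have fin: "finite (perms n)" unfolding perms_def by (rule finite_permutations) simp
  have "(\<Sum>\<sigma>\<in>{\<sigma>\<in>perms n. E \<sigma>}. wt \<theta> n \<sigma>) = (\<Sum>\<sigma>\<in>perms n. if E \<sigma> then wt \<theta> n \<sigma> else 0)"
    by (rule sum.inter_filter[OF fin])
  also have "\<dots> = Tn n (\<lambda>M. if E' M then Gth \<theta> M else 0)"
    unfolding Tn_def perms_def by (rule sum.cong) (auto simp: wt_Gth assms)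
  finally show ?thesis by (simp add: Pn_def)
qed

lemma Tn_rec:
  assumes "n \<ge> 1"
  shows "Tn n G = (\<Sum>l\<in>{1..n}. real ((n - 1) choose (l - 1)) * fact (l - 1) * Tn (n - l) (\<lambda>M. G (add_mset l M)))"
proof -
  have "(\<Sum>\<sigma>\<in>{\<sigma>. \<sigma> permutes {1..n}}. (\<lambda>_ M. G M) (card (orbit \<sigma> 1)) (mct {1..n} \<sigma>)) =
    (\<Sum>l\<in>{1..card {1..n}}. real ((card {1..n} - 1) choose (l - 1)) * fact (l - 1) * Tn (card {1..n} - l) (\<lambda>M. (\<lambda>_ M. G M) l (add_mset l M)))"
    by (rule step_sum) (use assms in \<open>auto intro: main_sum\<close>)
  then show ?thesis by (simp add: Tn_def)
qed

lemma L1_sum: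
  assumes "n \<ge> 1"
  shows "(\<Sum>\<sigma>\<in>perms n. F (L1 \<sigma>) (mct {1..n} \<sigma>)) = (\<Sum>l\<in>{1..n}. real ((n - 1) choose (l - 1)) * fact (l - 1) * Tn (n - l) (\<lambda>M. F l (add_mset l M)))"
proof -
  have "(\<Sum>\<sigma>\<in>{\<sigma>. \<sigma> permutes {1..n}}. F (card (orbit \<sigma> 1)) (mct {1..n} \<sigma>)) =
    (\<Sum>l\<in>{1..card {1..n}}. real ((card {1..n} - 1) choose (l - 1)) * fact (l - 1) * Tn (card {1..n} - l) (\<lambda>M. F l (add_mset l M)))"
    by (rule step_sum) (use assms in \<open>auto intro: main_sum\<close>)
  then show ?thesis by (simp add: perms_def L1_def)
qed

lemma coef: "1 \<le> l \<Longrightarrow> l \<le> n \<Longrightarrow> real ((n - 1) choose (l - 1)) * fact (l - 1) * fact (n - l) = fact (n - 1)"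
proof -
  assume l: "1 \<le> l" "l \<le> n"
  have "fact (l - 1) * fact ((n - 1) - (l - 1)) * ((n - 1) choose (l - 1)) = fact (n - 1)"
    using l by (intro binomial_fact_lemma) auto
  moreover have "(n - 1) - (l - 1) = n - l" using l by auto
  ultimately have "fact (l - 1) * fact (n - l) * ((n - 1) choose (l - 1)) = (fact (n - 1) :: nat)" by simp
  then have "real (fact (l - 1) * fact (n - l) * ((n - 1) choose (l - 1))) = real (fact (n - 1))" by simp
  then show ?thesis by (simp add: mult_ac)
qed

lemma Tn_cmult: "Tn n (\<lambda>M. c * G M) = c * Tn n G"
  by (simp add: Tn_def sum_distrib_left)

lemma Tn_zero: "Tn n (\<lambda>M. 0) = 0"
  by (simp add: Tn_def)

lemma Tn_0: "Tn 0 G = G {#}"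
proof -
  have "mct {} id = {#}" by (simp add: mct_def cyc_def)
  then show ?thesis by (simp add: Tn_def)
qed

lemma Tn_cong: "(\<And>M. G M = G' M) \<Longrightarrow> Tn n G = Tn n G'"
  by (simp add: Tn_def)




lemma hrec:
  assumes n: "n \<ge> 1"
  shows "real n * hseq \<theta> n = (\<Sum>l\<in>{1..n}. \<theta> l * hseq \<theta> (n - l))"
proof -
  have "fact n * hseq \<theta> n = Tn n (Gth \<theta>)" by (simp add: Tn_Gth)
  also have "\<dots> = (\<Sum>l\<in>{1..n}. real ((n - 1) choose (l - 1)) * fact (l - 1) * Tn (n - l) (\<lambda>M. Gth \<theta> (add_mset l M)))"
    by (rule Tn_rec[OF n])
  also have "\<dots> = (\<Sum>l\<in>{1..n}. fact (n - 1) * (\<theta> l * hseq \<theta> (n - l)))"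
  proof (rule sum.cong[OF refl])
    fix l assume l: "l \<in> {1..n}"
    have "Tn (n - l) (\<lambda>M. Gth \<theta> (add_mset l M)) = \<theta> l * (fact (n - l) * hseq \<theta> (n - l))"
      by (simp add: Tn_cmult Tn_Gth)
    then show "real ((n - 1) choose (l - 1)) * fact (l - 1) * Tn (n - l) (\<lambda>M. Gth \<theta> (add_mset l M)) = fact (n - 1) * (\<theta> l * hseq \<theta> (n - l))"
      using coef[of l n] l by (simp add: mult_ac)
  qed
  also have "\<dots> = fact (n - 1) * (\<Sum>l\<in>{1..n}. \<theta> l * hseq \<theta> (n - l))" by (simp add: sum_distrib_left)
  finally have *: "fact n * hseq \<theta> n = fact (n - 1) * (\<Sum>l\<in>{1..n}. \<theta> l * hseq \<theta> (n - l))" .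
  have "fact n = real n * fact (n - 1)" using n by (simp add: fact_reduce[of n])
  with * have "fact (n - 1) * (real n * hseq \<theta> n) = fact (n - 1) * (\<Sum>l\<in>{1..n}. \<theta> l * hseq \<theta> (n - l))"
    by (simp add: mult_ac)
  then show ?thesis by simp
qed

lemma hseq_0: "hseq \<theta> 0 = 1"
proof -
  have "hseq \<theta> 0 = Tn 0 (Gth \<theta>) / fact 0" by (simp add: Tn_Gth)
  then show ?thesis by (simp add: Tn_0)
qed

lemma hseq_Eb:
  "hseq \<theta> n = Eb (\<lambda>l. \<theta> l / real l) n"
proof (induction n rule: less_induct)
  case (less n)
  show ?case
  proof (cases "n = 0")
    case True then show ?thesis by (simp add: hseq_0 Eb_0)
  next
    case False
    have "real n * hseq \<theta> n = (\<Sum>l\<in>{1..n}. \<theta> l * hseq \<theta> (n - l))" using hrec False by simp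
    also have "\<dots> = (\<Sum>l\<in>{1..n}. real l * (\<theta> l / real l) * Eb (\<lambda>l. \<theta> l / real l) (n - l))"
    proof (rule sum.cong[OF refl])
      fix l assume l: "l \<in> {1..n}"
      then have "hseq \<theta> (n - l) = Eb (\<lambda>l. \<theta> l / real l) (n - l)" using less.IH[of "n - l"] by auto
      then show "\<theta> l * hseq \<theta> (n - l) = real l * (\<theta> l / real l) * Eb (\<lambda>l. \<theta> l / real l) (n - l)"
        using l by simp
    qed
    also have "\<dots> = real n * Eb (\<lambda>l. \<theta> l / real l) n" by (rule Eb_rec[symmetric]) simp
    finally show ?thesis using False by simp
  qed
qed

lemma L1_formula:
  assumes mn: "m < n"
  shows "(\<Sum>\<sigma>\<in>{\<sigma>\<in>perms n. L1 \<sigma> + m = n}. wt \<theta> n \<sigma>) = fact (n - 1) * \<theta> (n - m) * hseq \<theta> m"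
proof -
  have n: "n \<ge> 1" using mn by simp
  have fin: "finite (perms n)" unfolding perms_def by (rule finite_permutations) simp
  define F where "F l M = (if l + m = n then Gth \<theta> M else 0)" for l M
  have "(\<Sum>\<sigma>\<in>{\<sigma>\<in>perms n. L1 \<sigma> + m = n}. wt \<theta> n \<sigma>) = (\<Sum>\<sigma>\<in>perms n. if L1 \<sigma> + m = n then wt \<theta> n \<sigma> else 0)"
    by (rule sum.inter_filter[OF fin])
  also have "\<dots> = (\<Sum>\<sigma>\<in>perms n. F (L1 \<sigma>) (mct {1..n} \<sigma>))"
    by (rule sum.cong) (auto simp: F_def perms_def wt_Gth)
  also have "\<dots> = (\<Sum>l\<in>{1..n}. real ((n - 1) choose (l - 1)) * fact (l - 1) * Tn (n - l) (\<lambda>M. F l (add_mset l M)))"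
    by (rule L1_sum[OF n])
  also have "\<dots> = (\<Sum>l\<in>{1..n}. if l = n - m then fact (n - 1) * \<theta> (n - m) * hseq \<theta> m else 0)"
  proof (rule sum.cong[OF refl])
    fix l assume l: "l \<in> {1..n}"
    show "real ((n - 1) choose (l - 1)) * fact (l - 1) * Tn (n - l) (\<lambda>M. F l (add_mset l M)) =
      (if l = n - m then fact (n - 1) * \<theta> (n - m) * hseq \<theta> m else 0)"
    proof (cases "l = n - m")
      case True
      then have lm: "l + m = n" "n - l = m" using mn by auto
      have "Tn (n - l) (\<lambda>M. F l (add_mset l M)) = \<theta> l * (fact m * hseq \<theta> m)"
        by (simp add: F_def lm Tn_cmult Tn_Gth)
      then show ?thesis using coef[of l n] l True lm by (simp add: mult_ac)
    next
      case False
      then have "l + m \<noteq> n" using mn by auto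
      then show ?thesis using False by (simp add: F_def Tn_zero)
    qed
  qed
  also have "\<dots> = fact (n - 1) * \<theta> (n - m) * hseq \<theta> m"
    using mn by (subst sum.delta) auto
  finally show ?thesis .
qed

lemma K_formula:
  "Tn n (\<lambda>M. if size M = m then Gth \<theta> M else 0) = fact n * pw (\<lambda>l. \<theta> l / real l) m n / fact m"
proof (induction n arbitrary: m rule: less_induct)
  case (less n)
  define a where "a = (\<lambda>l. \<theta> l / real l)"
  have a0: "a 0 = 0" by (simp add: a_def)
  show ?case
  proof (cases "n = 0")
    case True
    then show ?thesis by (simp add: Tn_0 pw_at0 a0[unfolded a_def])
  next
    case False
    then have n: "n \<ge> 1" by simp
    have "Tn n (\<lambda>M. if size M = m then Gth \<theta> M else 0) =
      (\<Sum>l\<in>{1..n}. real ((n - 1) choose (l - 1)) * fact (l - 1) * Tn (n - l) (\<lambda>M. if size (add_mset l M) = m then Gth \<theta> (add_mset l M) else 0))"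
      by (rule Tn_rec[OF n])
    also have "\<dots> = fact n * pw a m n / fact m"
    proof (cases "m = 0")
      case True
      then have "\<And>l. Tn (n - l) (\<lambda>M. if size (add_mset l M) = m then Gth \<theta> (add_mset l M) else 0) = 0"
        by (simp add: Tn_zero)
      then show ?thesis using True n by (simp add: pw_0)
    next
      case False
      have "(\<Sum>l\<in>{1..n}. real ((n - 1) choose (l - 1)) * fact (l - 1) * Tn (n - l) (\<lambda>M. if size (add_mset l M) = m then Gth \<theta> (add_mset l M) else 0))
         = (\<Sum>l\<in>{1..n}. fact (n - 1) / fact (m - 1) * (real l * a l * pw a (m - 1) (n - l)))"
      proof (rule sum.cong[OF refl])
        fix l assume l: "l \<in> {1..n}"
        have "Tn (n - l) (\<lambda>M. if size (add_mset l M) = m then Gth \<theta> (add_mset l M) else 0)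
            = Tn (n - l) (\<lambda>M. \<theta> l * (if size M = m - 1 then Gth \<theta> M else 0))"
          by (rule Tn_cong) (use False in auto)
        also have "\<dots> = \<theta> l * (fact (n - l) * pw a (m - 1) (n - l) / fact (m - 1))"
          using less.IH[of "n - l" "m - 1"] l by (simp add: Tn_cmult a_def)
        finally have "real ((n - 1) choose (l - 1)) * fact (l - 1) * Tn (n - l) (\<lambda>M. if size (add_mset l M) = m then Gth \<theta> (add_mset l M) else 0)
            = (real ((n - 1) choose (l - 1)) * fact (l - 1) * fact (n - l)) * \<theta> l * pw a (m - 1) (n - l) / fact (m - 1)"
          by (simp add: mult_ac)
        also have "\<dots> = fact (n - 1) * \<theta> l * pw a (m - 1) (n - l) / fact (m - 1)"
          using coef[of l n] l by simp
        also have "\<theta> l = real l * a l" using l by (simp add: a_def)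
        finally show "real ((n - 1) choose (l - 1)) * fact (l - 1) * Tn (n - l) (\<lambda>M. if size (add_mset l M) = m then Gth \<theta> (add_mset l M) else 0)
            = fact (n - 1) / fact (m - 1) * (real l * a l * pw a (m - 1) (n - l))" by simp
      qed
      also have "\<dots> = fact (n - 1) / fact (m - 1) * (\<Sum>l\<in>{1..n}. real l * a l * pw a (m - 1) (n - l))"
        by (simp add: sum_distrib_left)
      also have "(\<Sum>l\<in>{1..n}. real l * a l * pw a (m - 1) (n - l)) = real n * pw a m n / real m"
        using pw_deriv[of m n a] False by simp
      also have "fact (n - 1) / fact (m - 1) * (real n * pw a m n / real m) = fact n * pw a m n / fact m"
      proof -
        have "fact n = real n * fact (n - 1)" using n by (simp add: fact_reduce[of n])
        moreover have "fact m = real m * fact (m - 1)" using False by (simp add: fact_reduce[of m])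
        ultimately show ?thesis using False by (simp add: field_simps)
      qed
      finally show ?thesis .
    qed
    finally show ?thesis by (simp add: a_def)
  qed
qed




definition Pr :: "(nat \<Rightarrow> real) \<Rightarrow> nat \<Rightarrow> (nat \<Rightarrow> nat) \<Rightarrow> real" where
  "Pr a k r = (\<Prod>j\<in>{1..k}. a j ^ r j / fact (r j))"

definition sr :: "nat \<Rightarrow> (nat \<Rightarrow> nat) \<Rightarrow> nat" where
  "sr k r = (\<Sum>j\<in>{1..k}. j * r j)"

definition GR :: "(nat \<Rightarrow> real) \<Rightarrow> nat \<Rightarrow> (nat \<Rightarrow> nat) \<Rightarrow> nat multiset \<Rightarrow> real" where
  "GR \<theta> k r M = (if \<forall>j\<in>{1..k}. count M j = r j then Gth \<theta> M else 0)"

definition trunc :: "(nat \<Rightarrow> real) \<Rightarrow> nat \<Rightarrow> nat \<Rightarrow> real" where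
  "trunc a k l = (if l \<le> k then 0 else a l)"

definition gext :: "(nat \<Rightarrow> real) \<Rightarrow> nat \<Rightarrow> nat \<Rightarrow> real" where
  "gext g n s = (if s \<le> n then g (n - s) else 0)"

lemma GR_add:
  assumes l: "l \<ge> 1"
  shows "GR \<theta> k r (add_mset l M) = \<theta> l * (if l \<le> k then (if r l \<ge> 1 then GR \<theta> k (r(l := r l - 1)) M else 0) else GR \<theta> k r M)"
proof (cases "l \<le> k")
  case True
  have "(\<forall>j\<in>{1..k}. count (add_mset l M) j = r j) \<longleftrightarrow> (r l \<ge> 1 \<and> (\<forall>j\<in>{1..k}. count M j = (r(l := r l - 1)) j))"
  proof
    assume h: "\<forall>j\<in>{1..k}. count (add_mset l M) j = r j"
    have rl: "Suc (count M l) = r l" using h[rule_format, of l] l True by simp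
    show "r l \<ge> 1 \<and> (\<forall>j\<in>{1..k}. count M j = (r(l := r l - 1)) j)"
    proof (intro conjI ballI)
      show "r l \<ge> 1" using rl by simp
      fix j assume j: "j \<in> {1..k}"
      show "count M j = (r(l := r l - 1)) j"
      proof (cases "j = l")
        case True then show ?thesis using rl by simp
      next
        case False then show ?thesis using h[rule_format, OF j] by simp
      qed
    qed
  next
    assume h: "r l \<ge> 1 \<and> (\<forall>j\<in>{1..k}. count M j = (r(l := r l - 1)) j)"
    show "\<forall>j\<in>{1..k}. count (add_mset l M) j = r j"
    proof
      fix j assume j: "j \<in> {1..k}"
      show "count (add_mset l M) j = r j"
      proof (cases "j = l")
        case True then show ?thesis using h j by auto
      next
        case False then show ?thesis using h j by auto
      qed
    qed
  qed
  then show ?thesis using True by (auto simp: GR_def)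
next
  case False
  have "(\<forall>j\<in>{1..k}. count (add_mset l M) j = r j) \<longleftrightarrow> (\<forall>j\<in>{1..k}. count M j = r j)"
    using False by auto
  then show ?thesis using False by (auto simp: GR_def)
qed

lemma Pr_step:
  assumes l: "l \<in> {1..k}" and rl: "r l \<ge> 1"
  shows "Pr a k r = Pr a k (r(l := r l - 1)) * a l / real (r l)"
proof -
  define r' where "r' = r(l := r l - 1)"
  have r'l: "r' l = r l - 1" and r'o: "\<And>j. j \<noteq> l \<Longrightarrow> r' j = r j" by (auto simp: r'_def)
  define rest where "rest = (\<Prod>j\<in>{1..k} - {l}. a j ^ r j / fact (r j))"
  have A: "Pr a k r = a l ^ r l / fact (r l) * rest"
    unfolding Pr_def rest_def by (rule prod.remove) (use l in auto)
  have B: "Pr a k r' = a l ^ r' l / fact (r' l) * (\<Prod>j\<in>{1..k} - {l}. a j ^ r' j / fact (r' j))"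
    unfolding Pr_def by (rule prod.remove) (use l in auto)
  have C: "(\<Prod>j\<in>{1..k} - {l}. a j ^ r' j / fact (r' j)) = rest"
    unfolding rest_def by (rule prod.cong) (auto simp: r'o)
  have D: "a l ^ r l / fact (r l) = a l ^ (r l - 1) / fact (r l - 1) * a l / real (r l)"
  proof -
    obtain q where q: "r l = Suc q" using rl by (cases "r l") auto
    show ?thesis unfolding q by (simp add: field_simps)
  qed
  have "Pr a k r = Pr a k r' * a l / real (r l)"
    unfolding A B C r'l D by (simp add: mult_ac)
  then show ?thesis by (simp only: r'_def)
qed

lemma sr_step:
  assumes l: "l \<in> {1..k}" and rl: "r l \<ge> 1"
  shows "sr k r = sr k (r(l := r l - 1)) + l"
proof -
  define r' where "r' = r(l := r l - 1)"
  have r'l: "r' l = r l - 1" and r'o: "\<And>j. j \<noteq> l \<Longrightarrow> r' j = r j" by (auto simp: r'_def)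
  define rest where "rest = (\<Sum>j\<in>{1..k} - {l}. j * r j)"
  have A: "sr k r = l * r l + rest"
    unfolding sr_def rest_def by (rule sum.remove) (use l in auto)
  have B: "sr k r' = l * r' l + (\<Sum>j\<in>{1..k} - {l}. j * r' j)"
    unfolding sr_def by (rule sum.remove) (use l in auto)
  have C: "(\<Sum>j\<in>{1..k} - {l}. j * r' j) = rest"
    unfolding rest_def by (rule sum.cong) (auto simp: r'o)
  have "sr k r = sr k r' + l"
    unfolding A B C r'l using rl by (cases "r l") (auto simp: algebra_simps)
  then show ?thesis by (simp only: r'_def)
qed

lemma sr_ge: "l \<in> {1..k} \<Longrightarrow> l * r l \<le> sr k r"
  unfolding sr_def by (rule member_le_sum) auto

lemma sr_zero: "sr k r = 0 \<longleftrightarrow> (\<forall>j\<in>{1..k}. r j = 0)"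
  unfolding sr_def by auto

lemma Pr_zero: "(\<forall>j\<in>{1..k}. r j = 0) \<Longrightarrow> Pr a k r = 1"
  unfolding Pr_def by simp

lemma key_identity:
  fixes a :: "nat \<Rightarrow> real" and k :: nat
  assumes a0: "a 0 = 0"
  defines "g \<equiv> Eb (trunc a k)"
  shows "gext g n (sr k r) * (\<Sum>l\<in>{1..n}. real l * real (if l \<le> k then r l else 0))
     + (\<Sum>l\<in>{1..n}. real l * trunc a k l * gext g (n - l) (sr k r)) = real n * gext g n (sr k r)"
proof (cases "sr k r \<le> n")
  case False
  then have "\<And>l. gext g (n - l) (sr k r) = 0" by (auto simp: gext_def)
  then show ?thesis using False by (simp add: gext_def)
next
  case True
  define s where "s = sr k r"
  have sn: "s \<le> n" using True by (simp add: s_def)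
  have S1: "(\<Sum>l\<in>{1..n}. real l * real (if l \<le> k then r l else 0)) = real s"
  proof -
    have "(\<Sum>l\<in>{1..n}. real l * real (if l \<le> k then r l else 0)) = (\<Sum>l\<in>{1..n+k}. real l * real (if l \<le> k then r l else 0))"
    proof (rule sum.mono_neutral_left)
      show "\<forall>l\<in>{1..n+k} - {1..n}. real l * real (if l \<le> k then r l else 0) = 0"
      proof
        fix l assume l: "l \<in> {1..n+k} - {1..n}"
        show "real l * real (if l \<le> k then r l else 0) = 0"
        proof (cases "l \<le> k")
          case True
          then have "l * r l \<le> s" using sr_ge[of l k r] l by (simp add: s_def)
          then have "r l = 0" using l sn by (cases "r l") auto
          then show ?thesis by simp
        qed simp
      qed
    qed auto
    also have "\<dots> = (\<Sum>l\<in>{1..k}. real l * real (if l \<le> k then r l else 0))"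
      by (rule sum.mono_neutral_right) auto
    also have "\<dots> = real s" by (simp add: s_def sr_def)
    finally show ?thesis .
  qed
  have S2: "(\<Sum>l\<in>{1..n}. real l * trunc a k l * gext g (n - l) s) = real (n - s) * g (n - s)"
  proof -
    have "(\<Sum>l\<in>{1..n}. real l * trunc a k l * gext g (n - l) s) = (\<Sum>l\<in>{1..n-s}. real l * trunc a k l * gext g (n - l) s)"
      by (rule sum.mono_neutral_right) (auto simp: gext_def)
    also have "\<dots> = (\<Sum>l\<in>{1..n-s}. real l * trunc a k l * g (n - s - l))"
      by (rule sum.cong) (auto simp: gext_def add.commute)
    also have "\<dots> = real (n - s) * g (n - s)"
      unfolding g_def by (rule Eb_rec[symmetric]) (simp add: trunc_def)
    finally show ?thesis .
  qed
  show ?thesis unfolding s_def[symmetric] S1 S2 using sn by (simp add: gext_def algebra_simps)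
qed

lemma R_formula:
  fixes \<theta> :: "nat \<Rightarrow> real"
  assumes pos: "\<And>l. l \<ge> 1 \<Longrightarrow> \<theta> l > 0"
  defines "a \<equiv> (\<lambda>l. \<theta> l / real l)"
  shows "Tn n (GR \<theta> k r) = fact n * Pr a k r * gext (Eb (trunc a k)) n (sr k r)"
proof (induction n arbitrary: r rule: less_induct)
  case (less n)
  define g where "g = Eb (trunc a k)"
  have a0: "a 0 = 0" by (simp add: a_def)
  have g0: "g 0 = 1" unfolding g_def by (rule Eb_0) (simp add: trunc_def)
  have tha: "\<theta> l = real l * a l" if "l \<ge> 1" for l using that by (simp add: a_def)
  have apos: "a l > 0" if "l \<ge> 1" for l using pos[OF that] that by (simp add: a_def)
  show ?case
  proof (cases "n = 0")
    case True
    show ?thesis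
    proof (cases "\<forall>j\<in>{1..k}. r j = 0")
      case True
      then show ?thesis using \<open>n = 0\<close> g0
        by (simp add: Tn_0 GR_def Pr_zero sr_zero gext_def g_def)
    next
      case False
      then have "sr k r \<noteq> 0" by (simp add: sr_zero)
      moreover have "\<not> (\<forall>j\<in>{1..k}. count {#} j = r j)" using False by auto
      ultimately show ?thesis using \<open>n = 0\<close> by (simp add: Tn_0 GR_def gext_def)
    qed
  next
    case False
    then have n: "n \<ge> 1" by simp
    define s where "s = sr k r"
    have "Tn n (GR \<theta> k r) = (\<Sum>l\<in>{1..n}. real ((n - 1) choose (l - 1)) * fact (l - 1) * Tn (n - l) (\<lambda>M. GR \<theta> k r (add_mset l M)))"
      by (rule Tn_rec[OF n])
    also have "\<dots> = (\<Sum>l\<in>{1..n}. fact (n - 1) * Pr a k r * (real l * real (if l \<le> k then r l else 0) * gext g n s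
                  + real l * trunc a k l * gext g (n - l) s))"
    proof (rule sum.cong[OF refl])
      fix l assume l: "l \<in> {1..n}"
      have l1: "l \<ge> 1" and ln: "l \<le> n" using l by auto
      have cf: "real ((n - 1) choose (l - 1)) * fact (l - 1) * fact (n - l) = fact (n - 1)" using coef l1 ln .
      have "Tn (n - l) (\<lambda>M. GR \<theta> k r (add_mset l M)) = fact (n - l) * (\<theta> l * (if l \<le> k then (if r l \<ge> 1 then Pr a k (r(l := r l - 1)) * gext g (n - l) (sr k (r(l := r l - 1))) else 0) else Pr a k r * gext g (n - l) s))"
      proof (cases "l \<le> k")
        case True
        show ?thesis
        proof (cases "r l \<ge> 1")
          case True
          have "Tn (n - l) (\<lambda>M. GR \<theta> k r (add_mset l M)) = Tn (n - l) (\<lambda>M. \<theta> l * GR \<theta> k (r(l := r l - 1)) M)"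
            by (rule Tn_cong) (use GR_add[OF l1] \<open>l \<le> k\<close> True in simp)
          also have "\<dots> = \<theta> l * (fact (n - l) * Pr a k (r(l := r l - 1)) * gext g (n - l) (sr k (r(l := r l - 1))))"
            using less.IH[of "n - l"] l1 ln by (simp add: Tn_cmult g_def)
          finally show ?thesis using True \<open>l \<le> k\<close> by (simp add: mult_ac)
        next
          case False
          have "Tn (n - l) (\<lambda>M. GR \<theta> k r (add_mset l M)) = Tn (n - l) (\<lambda>M. 0)"
            by (rule Tn_cong) (use GR_add[OF l1] \<open>l \<le> k\<close> False in simp)
          then show ?thesis using False \<open>l \<le> k\<close> by (simp add: Tn_zero)
        qed
      next
        case False
        have "Tn (n - l) (\<lambda>M. GR \<theta> k r (add_mset l M)) = Tn (n - l) (\<lambda>M. \<theta> l * GR \<theta> k r M)"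
          by (rule Tn_cong) (use GR_add[OF l1] False in simp)
        also have "\<dots> = \<theta> l * (fact (n - l) * Pr a k r * gext g (n - l) s)"
          using less.IH[of "n - l"] l1 ln by (simp add: Tn_cmult g_def s_def)
        finally show ?thesis using False by (simp add: mult_ac)
      qed
      moreover have "\<theta> l * (if l \<le> k then (if r l \<ge> 1 then Pr a k (r(l := r l - 1)) * gext g (n - l) (sr k (r(l := r l - 1))) else 0) else Pr a k r * gext g (n - l) s)
          = Pr a k r * (real l * real (if l \<le> k then r l else 0) * gext g n s + real l * trunc a k l * gext g (n - l) s)"
      proof (cases "l \<le> k")
        case lk: True
        then have lK: "l \<in> {1..k}" using l1 by simp
        show ?thesis
        proof (cases "r l \<ge> 1")
          case True
          have P: "Pr a k (r(l := r l - 1)) = Pr a k r * real (r l) / a l"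
            using Pr_step[where a=a and r=r and l=l and k=k, OF lK True] apos[OF l1] True by (simp add: field_simps)
          have S: "sr k (r(l := r l - 1)) = s - l" "l \<le> s" using sr_step[where r=r and l=l and k=k, OF lK True] by (auto simp: s_def)
          have G: "gext g (n - l) (s - l) = gext g n s" using S(2) ln by (auto simp: gext_def)
          show ?thesis using lk True apos[OF l1] unfolding P S(1) G tha[OF l1]
            by (simp add: trunc_def field_simps)
        next
          case False
          then show ?thesis using lk by (simp add: trunc_def)
        qed
      next
        case False
        then show ?thesis unfolding tha[OF l1] by (simp add: trunc_def mult_ac)
      qed
      ultimately show "real ((n - 1) choose (l - 1)) * fact (l - 1) * Tn (n - l) (\<lambda>M. GR \<theta> k r (add_mset l M)) =
          fact (n - 1) * Pr a k r * (real l * real (if l \<le> k then r l else 0) * gext g n s + real l * trunc a k l * gext g (n - l) s)"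
        using cf by (metis (no_types, lifting) mult.assoc)
    qed
    also have "\<dots> = fact (n - 1) * Pr a k r * ((\<Sum>l\<in>{1..n}. real l * real (if l \<le> k then r l else 0) * gext g n s)
                  + (\<Sum>l\<in>{1..n}. real l * trunc a k l * gext g (n - l) s))"
      by (simp only: sum_distrib_left sum.distrib distrib_left)
    also have "\<dots> = fact (n - 1) * Pr a k r * (real n * gext g n s)"
    proof -
      have e1: "(\<Sum>l\<in>{1..n}. real l * real (if l \<le> k then r l else 0) * gext g n s) = gext g n s * (\<Sum>l\<in>{1..n}. real l * real (if l \<le> k then r l else 0))"
        by (simp add: sum_distrib_left mult_ac)
      have e2: "gext g n s * (\<Sum>l\<in>{1..n}. real l * real (if l \<le> k then r l else 0)) + (\<Sum>l\<in>{1..n}. real l * trunc a k l * gext g (n - l) s) = real n * gext g n s"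
        using key_identity[where a=a and k=k and n=n and r=r, OF a0] unfolding g_def s_def .
      show ?thesis unfolding e1 e2 ..
    qed
    also have "\<dots> = fact n * Pr a k r * gext g n s"
      using n by (simp add: fact_reduce[of n] mult_ac)
    finally show ?thesis by (simp add: g_def s_def)
  qed
qed




lemma th_shift:
  fixes \<theta> :: "nat \<Rightarrow> real"
  assumes pos: "\<And>n. n \<ge> 1 \<Longrightarrow> \<theta> n > 0"
    and ratio: "(\<lambda>n. \<theta> (Suc n) / \<theta> n) \<longlonglongrightarrow> 1"
  shows "(\<lambda>n. \<theta> (n - s) / \<theta> n) \<longlonglongrightarrow> 1"
proof (induction s)
  case 0
  have "eventually (\<lambda>n. \<theta> (n - 0) / \<theta> n = 1) sequentially"
    using eventually_ge_at_top[of 1] by eventually_elim (use pos in force)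
  then show ?case by (rule tendsto_eventually)
next
  case (Suc s)
  have u: "(\<lambda>n. \<theta> (Suc (n - Suc s)) / \<theta> (n - Suc s)) \<longlonglongrightarrow> 1"
    by (rule seq_shift_tendsto[OF ratio])
  have "(\<lambda>n. inverse (\<theta> (Suc (n - Suc s)) / \<theta> (n - Suc s)) * (\<theta> (n - s) / \<theta> n)) \<longlonglongrightarrow> inverse 1 * 1"
    by (intro tendsto_mult tendsto_inverse u Suc.IH) auto
  moreover have "eventually (\<lambda>n. inverse (\<theta> (Suc (n - Suc s)) / \<theta> (n - Suc s)) * (\<theta> (n - s) / \<theta> n) = \<theta> (n - Suc s) / \<theta> n) sequentially"
    using eventually_ge_at_top[of "Suc (Suc s)"]
  proof eventually_elim
    case (elim n)
    then have e: "Suc (n - Suc s) = n - s" by simp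
    have "\<theta> (n - s) > 0" "\<theta> (n - Suc s) > 0" using pos elim by auto
    then show ?case unfolding e by (simp add: field_simps)
  qed
  ultimately show ?case by (simp add: tendsto_cong)
qed

lemma real_shift: "(\<lambda>n. real n / real (n - s)) \<longlonglongrightarrow> 1"
proof -
  have "(\<lambda>n. inverse (1 - real s / real n)) \<longlonglongrightarrow> inverse (1 - 0)"
    by (intro tendsto_inverse tendsto_diff tendsto_const lim_const_over_n) auto
  moreover have "eventually (\<lambda>n. inverse (1 - real s / real n) = real n / real (n - s)) sequentially"
    using eventually_ge_at_top[of "Suc s"]
  proof eventually_elim
    case (elim n)
    then have "real (n - s) = real n - real s" by simp
    then show ?case using elim by (simp add: field_simps)
  qed
  ultimately show ?thesis by (simp add: tendsto_cong)
qed

lemma hseq_pos: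
  assumes pos: "\<And>n. n \<ge> 1 \<Longrightarrow> \<theta> n > 0"
  shows "hseq \<theta> n > 0"
proof -
  have fin: "finite (perms n)" unfolding perms_def by (rule finite_permutations) simp
  have wpos: "wt \<theta> n \<sigma> > 0" for \<sigma> unfolding wt_def by (intro prod_pos zero_less_power pos) auto
  have "id \<in> perms n" by (simp add: perms_def)
  then have "(\<Sum>\<sigma>\<in>perms n. wt \<theta> n \<sigma>) > 0"
    using fin wpos by (intro sum_pos) auto
  then show ?thesis by (simp add: hseq_def)
qed

lemma wseq_inst:
  fixes \<theta> c :: "nat \<Rightarrow> real"
  assumes pos: "\<And>n. n \<ge> 1 \<Longrightarrow> \<theta> n > 0"
    and csum: "summable (\<lambda>j. c (Suc j) / real (Suc j))"
    and cbound: "\<And>n j. 1 \<le> j \<Longrightarrow> 2 * j \<le> n \<Longrightarrow> \<theta> (n - j) * \<theta> j / \<theta> n < c j"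
    and ratio: "(\<lambda>n. \<theta> (Suc n) / \<theta> n) \<longlonglongrightarrow> 1"
  shows "wseq (\<lambda>n. \<theta> n / real n) (\<lambda>j. 2 * c j / real j)"
proof -
  define a where "a = (\<lambda>n. \<theta> n / real n)"
  define d where "d = (\<lambda>j. 2 * c j / real j)"
  have thc: "\<theta> j \<le> c j" if j: "j \<ge> 1" for j
  proof -
    have "(\<lambda>n. \<theta> j * (\<theta> (n - j) / \<theta> n)) \<longlonglongrightarrow> \<theta> j * 1"
      by (intro tendsto_mult tendsto_const th_shift[OF pos ratio])
    moreover have "\<forall>n\<ge>2*j. \<theta> j * (\<theta> (n - j) / \<theta> n) \<le> c j"
      using cbound[OF j] by (auto simp: mult_ac less_imp_le)
    ultimately show ?thesis using LIMSEQ_le_const2 by fastforce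
  qed
  have cs: "summable (\<lambda>j. c j / real j)"
    using csum by (subst summable_Suc_iff[symmetric]) simp
  show ?thesis
  proof (unfold_locales)
    show "\<theta> 0 / real 0 = 0" by simp
    show "\<And>n. 1 \<le> n \<Longrightarrow> 0 < \<theta> n / real n" using pos by simp
    show "summable (\<lambda>j. 2 * c j / real j)" using summable_mult[OF cs, of 2] by simp
    show "\<And>j. 0 \<le> 2 * c j / real j"
    proof -
      fix j show "0 \<le> 2 * c j / real j"
        using thc[of j] pos[of j] by (cases "j = 0") (auto intro!: divide_nonneg_pos)
    qed
    show "summable (\<lambda>n. \<theta> n / real n)"
    proof (rule summable_comparison_test[OF _ cs])
      show "\<exists>N. \<forall>n\<ge>N. norm (\<theta> n / real n) \<le> c n / real n"
      proof (intro exI[of _ 1] allI impI)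
        fix n :: nat assume "n \<ge> 1"
        then show "norm (\<theta> n / real n) \<le> c n / real n"
          using thc[of n] pos[of n] by (simp add: divide_right_mono)
      qed
    qed
    show "\<And>j n. 1 \<le> j \<Longrightarrow> 2 * j \<le> n \<Longrightarrow> \<theta> j / real j * (\<theta> (n - j) / real (n - j)) / (\<theta> n / real n) \<le> 2 * c j / real j"
    proof -
      fix j n :: nat assume j: "1 \<le> j" and jn: "2 * j \<le> n"
      have p: "\<theta> j > 0" "\<theta> (n - j) > 0" "\<theta> n > 0" using pos j jn by auto
      have X: "\<theta> (n - j) * \<theta> j / \<theta> n < c j" by (rule cbound[OF j jn])
      have Y: "real n / real (n - j) \<le> 2"
      proof -
        have "real n \<le> 2 * real (n - j)" using jn by linarith
        moreover have "real (n - j) > 0" using j jn by simp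
        ultimately show ?thesis by (simp add: divide_le_eq)
      qed
      have "\<theta> j / real j * (\<theta> (n - j) / real (n - j)) / (\<theta> n / real n)
          = (\<theta> (n - j) * \<theta> j / \<theta> n) * (real n / real (n - j)) / real j"
        using p j jn by (simp add: field_simps)
      also have "\<dots> \<le> c j * 2 / real j"
        by (intro divide_right_mono mult_mono) (use X Y p thc[OF j] in \<open>auto simp: less_imp_le\<close>)
      finally show "\<theta> j / real j * (\<theta> (n - j) / real (n - j)) / (\<theta> n / real n) \<le> 2 * c j / real j"
        by (simp add: mult_ac)
    qed
    show "\<And>s. (\<lambda>n. \<theta> (n - s) / real (n - s) / (\<theta> n / real n)) \<longlonglongrightarrow> 1"
    proof -
      fix s
      have "(\<lambda>n. (\<theta> (n - s) / \<theta> n) * (real n / real (n - s))) \<longlonglongrightarrow> 1 * 1"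
        by (intro tendsto_mult th_shift[OF pos ratio] real_shift)
      moreover have "eventually (\<lambda>n. (\<theta> (n - s) / \<theta> n) * (real n / real (n - s)) = \<theta> (n - s) / real (n - s) / (\<theta> n / real n)) sequentially"
        using eventually_ge_at_top[of "Suc s"]
      proof eventually_elim
        case (elim n)
        have "\<theta> n > 0" "\<theta> (n - s) > 0" "real (n - s) > 0" using pos elim by auto
        then show ?case by (simp add: field_simps)
      qed
      ultimately show "(\<lambda>n. \<theta> (n - s) / real (n - s) / (\<theta> n / real n)) \<longlonglongrightarrow> 1"
        using Lim_transform_eventually by force
    qed
  qed
qed




theorem theorem7p1:
  fixes \<theta> c :: "nat \<Rightarrow> real"
  assumes pos: "\<And>n. n \<ge> 1 \<Longrightarrow> \<theta> n > 0"
    and csum: "summable (\<lambda>j. c (Suc j) / real (Suc j))"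
    and cbound: "\<And>n j. 1 \<le> j \<Longrightarrow> 2 * j \<le> n \<Longrightarrow> \<theta> (n - j) * \<theta> j / \<theta> n < c j"
    and ratio: "(\<lambda>n. \<theta> (Suc n) / \<theta> n) \<longlonglongrightarrow> 1"
  shows "summable (hseq \<theta>)
    \<and> (\<forall>m. (\<lambda>n. Pn \<theta> n (\<lambda>\<sigma>. L1 \<sigma> + m = n)) \<longlonglongrightarrow> hseq \<theta> m / (\<Sum>j. hseq \<theta> j))
    \<and> (\<forall>k (r :: nat \<Rightarrow> nat).
         (\<lambda>n. Pn \<theta> n (\<lambda>\<sigma>. \<forall>j\<in>{1..k}. Rcyc n j \<sigma> = r j))
           \<longlonglongrightarrow> (\<Prod>j\<in>{1..k}. poisson (\<theta> j / real j) (r j)))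
    \<and> summable (\<lambda>j. \<theta> (Suc j) / real (Suc j))
    \<and> (\<forall>k. (\<lambda>n. Pn \<theta> n (\<lambda>\<sigma>. Kcyc n \<sigma> = Suc k))
           \<longlonglongrightarrow> poisson (\<Sum>j. \<theta> (Suc j) / real (Suc j)) k)"
proof -
  define a where "a = (\<lambda>n. \<theta> n / real n)"
  define d where "d = (\<lambda>j. 2 * c j / real j)"
  interpret W: wseq a d unfolding a_def d_def by (rule wseq_inst[OF pos csum cbound ratio])
  have a0: "a 0 = 0" by (simp add: a_def)
  have apos: "a n > 0" if "n \<ge> 1" for n using W.apos that .
  have anonneg: "a j \<ge> 0" for j using apos[of j] a0 by (cases "j = 0") auto
  have hE: "hseq \<theta> = Eb a" unfolding a_def by (rule ext) (rule hseq_Eb)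
  define A where "A = suminf a"
  have hsums: "hseq \<theta> sums exp A" using W.Eb_sums[OF W.domd_a W.lim_a a0 anonneg] hE by (simp add: A_def)
  have hlim: "(\<lambda>n. hseq \<theta> n / a n) \<longlonglongrightarrow> exp A" using W.Eb_lim[OF W.domd_a W.lim_a a0] hE by (simp add: A_def)
  have hpos: "hseq \<theta> n > 0" for n using hseq_pos pos by blast
  have inv_lim: "(\<lambda>n. a n / hseq \<theta> n) \<longlonglongrightarrow> inverse (exp A)"
    using tendsto_inverse[OF hlim] by simp
  have hsum: "(\<Sum>j. hseq \<theta> j) = exp A" using hsums by (simp add: sums_iff)
  have fpos: "fact n > (0::real)" for n by simp
  have P1: "summable (hseq \<theta>)" using hsums by (rule sums_summable)
  have P2: "(\<lambda>n. Pn \<theta> n (\<lambda>\<sigma>. L1 \<sigma> + m = n)) \<longlonglongrightarrow> hseq \<theta> m / (\<Sum>j. hseq \<theta> j)" for m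
  proof -
    have l1: "(\<lambda>n. real (n - m) / real n) \<longlonglongrightarrow> 1"
      using tendsto_inverse[OF real_shift[of m]] by simp
    have "(\<lambda>n. hseq \<theta> m * (a (n - m) / a n) * (real (n - m) / real n) * (a n / hseq \<theta> n)) \<longlonglongrightarrow> hseq \<theta> m * 1 * 1 * inverse (exp A)"
      by (intro tendsto_mult tendsto_const W.ashift l1 inv_lim)
    moreover have "eventually (\<lambda>n. hseq \<theta> m * (a (n - m) / a n) * (real (n - m) / real n) * (a n / hseq \<theta> n) = Pn \<theta> n (\<lambda>\<sigma>. L1 \<sigma> + m = n)) sequentially"
      using eventually_gt_at_top[of m]
    proof eventually_elim
      case (elim n)
      have n1: "n \<ge> 1" using elim by simp
      have an: "a n > 0" "a (n - m) > 0" using apos elim by auto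
      have th: "\<theta> (n - m) = real (n - m) * a (n - m)" using elim by (simp add: a_def)
      have fn: "fact n = real n * fact (n - 1)" using n1 by (simp add: fact_reduce[of n])
      have "Pn \<theta> n (\<lambda>\<sigma>. L1 \<sigma> + m = n) = fact (n - 1) * \<theta> (n - m) * hseq \<theta> m / (fact n * hseq \<theta> n)"
        unfolding Pn_def using L1_formula[OF elim] by simp
      also have "\<dots> = hseq \<theta> m * (a (n - m) / a n) * (real (n - m) / real n) * (a n / hseq \<theta> n)"
        unfolding th fn using an hpos[of n] n1 fpos[of "n - 1"] by (simp add: field_simps)
      finally show ?case by simp
    qed
    ultimately have "(\<lambda>n. Pn \<theta> n (\<lambda>\<sigma>. L1 \<sigma> + m = n)) \<longlonglongrightarrow> hseq \<theta> m * 1 * 1 * inverse (exp A)"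
      using Lim_transform_eventually by force
    then show ?thesis by (simp add: hsum divide_inverse)
  qed
  have P3: "(\<lambda>n. Pn \<theta> n (\<lambda>\<sigma>. \<forall>j\<in>{1..k}. Rcyc n j \<sigma> = r j)) \<longlonglongrightarrow> (\<Prod>j\<in>{1..k}. poisson (\<theta> j / real j) (r j))"
    for k and r :: "nat \<Rightarrow> nat"
  proof -
    define s where "s = sr k r"
    define b where "b = trunc a k"
    define g where "g = Eb b"
    define S where "S = (\<Sum>j\<in>{1..k}. a j)"
    have b0: "b 0 = 0" by (simp add: b_def trunc_def)
    have db: "W.domd b 1" unfolding W.domd_def b_def trunc_def using anonneg by auto
    have lb: "(\<lambda>n. b n / a n) \<longlonglongrightarrow> 1"
    proof -
      have "eventually (\<lambda>n. b n / a n = 1) sequentially"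
        using eventually_gt_at_top[of k]
      proof eventually_elim
        case (elim n) then show ?case using apos[of n] by (simp add: b_def trunc_def)
      qed
      then show ?thesis by (rule tendsto_eventually)
    qed
    have bsum: "suminf b = A - S"
    proof -
      have 1: "a sums A" using W.asum by (simp add: A_def summable_sums)
      have 2: "(\<lambda>j. if j \<in> {..k} then a j else 0) sums (\<Sum>j\<in>{..k}. a j)"
        by (rule sums_If_finite_set) simp
      have "(\<lambda>j. a j - (if j \<in> {..k} then a j else 0)) sums (A - (\<Sum>j\<in>{..k}. a j))"
        by (rule sums_diff[OF 1 2])
      moreover have "(\<lambda>j. a j - (if j \<in> {..k} then a j else 0)) = b" by (auto simp: b_def trunc_def)
      moreover have "(\<Sum>j\<in>{..k}. a j) = S"
        unfolding S_def by (rule sum.mono_neutral_right) (auto simp: a_def not_less_eq_eq)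
      ultimately show ?thesis by (simp add: sums_iff)
    qed
    have glim: "(\<lambda>n. g (n - s) / a (n - s)) \<longlonglongrightarrow> exp (A - S)"
      using seq_shift_tendsto[OF W.Eb_lim[OF db lb b0]] by (simp add: g_def bsum)
    have "(\<lambda>n. Pr a k r * (g (n - s) / a (n - s)) * (a (n - s) / a n) * (a n / hseq \<theta> n)) \<longlonglongrightarrow> Pr a k r * exp (A - S) * 1 * inverse (exp A)"
      by (intro tendsto_mult tendsto_const glim W.ashift inv_lim)
    moreover have "eventually (\<lambda>n. Pr a k r * (g (n - s) / a (n - s)) * (a (n - s) / a n) * (a n / hseq \<theta> n) = Pn \<theta> n (\<lambda>\<sigma>. \<forall>j\<in>{1..k}. Rcyc n j \<sigma> = r j)) sequentially"
      using eventually_gt_at_top[of s]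
    proof eventually_elim
      case (elim n)
      have an: "a n > 0" "a (n - s) > 0" using apos elim by auto
      have GR: "(\<lambda>M. if \<forall>j\<in>{1..k}. count M j = r j then Gth \<theta> M else 0) = GR \<theta> k r"
        by (rule ext) (simp add: GR_def)
      have "Pn \<theta> n (\<lambda>\<sigma>. \<forall>j\<in>{1..k}. Rcyc n j \<sigma> = r j) = Tn n (GR \<theta> k r) / (fact n * hseq \<theta> n)"
        by (subst Pn_Tn[where E' = "\<lambda>M. \<forall>j\<in>{1..k}. count M j = r j"]) (auto simp: Rcyc_mct GR_def[abs_def])
      also have "\<dots> = fact n * Pr a k r * gext g n s / (fact n * hseq \<theta> n)"
        using R_formula[where n=n and k=k and r=r, OF pos] by (simp add: a_def g_def b_def s_def)
      also have "\<dots> = Pr a k r * (g (n - s) / a (n - s)) * (a (n - s) / a n) * (a n / hseq \<theta> n)"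
        using elim an hpos[of n] fpos[of n] by (simp add: gext_def field_simps)
      finally show ?case by simp
    qed
    ultimately have lim: "(\<lambda>n. Pn \<theta> n (\<lambda>\<sigma>. \<forall>j\<in>{1..k}. Rcyc n j \<sigma> = r j)) \<longlonglongrightarrow> Pr a k r * exp (A - S) * 1 * inverse (exp A)"
      using Lim_transform_eventually by force
    have "Pr a k r * exp (A - S) * 1 * inverse (exp A) = Pr a k r * exp (- S)"
      by (simp add: exp_diff exp_minus field_simps)
    also have "exp (- S) = (\<Prod>j\<in>{1..k}. exp (- a j))"
      unfolding S_def by (simp add: exp_sum[symmetric] sum_negf)
    also have "Pr a k r * (\<Prod>j\<in>{1..k}. exp (- a j)) = (\<Prod>j\<in>{1..k}. poisson (\<theta> j / real j) (r j))"
      unfolding Pr_def poisson_def a_def by (simp add: prod.distrib[symmetric])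
    finally show ?thesis using lim by simp
  qed
  have P4: "summable (\<lambda>j. \<theta> (Suc j) / real (Suc j))"
    using W.asum by (subst summable_Suc_iff[of "\<lambda>j. \<theta> j / real j"]) (simp add: a_def)
  have Asum: "(\<Sum>j. \<theta> (Suc j) / real (Suc j)) = A"
    using suminf_split_head[OF W.asum] a0 by (simp add: A_def a_def)
  have P5: "(\<lambda>n. Pn \<theta> n (\<lambda>\<sigma>. Kcyc n \<sigma> = Suc k)) \<longlonglongrightarrow> poisson (\<Sum>j. \<theta> (Suc j) / real (Suc j)) k" for k
  proof -
    obtain K :: real where K: "\<And>m. (\<lambda>n. pw a m n / a n) \<longlonglongrightarrow> real m * suminf a ^ (m - 1)"
      using W.pw_class[OF W.domd_a W.lim_a a0] by blast
    have "(\<lambda>n. (pw a (Suc k) n / a n) * (a n / hseq \<theta> n) / fact (Suc k)) \<longlonglongrightarrow> (real (Suc k) * A ^ k) * inverse (exp A) / fact (Suc k)"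
      using K[of "Suc k"] by (intro tendsto_mult tendsto_divide tendsto_const inv_lim) (auto simp: A_def)
    moreover have "eventually (\<lambda>n. (pw a (Suc k) n / a n) * (a n / hseq \<theta> n) / fact (Suc k) = Pn \<theta> n (\<lambda>\<sigma>. Kcyc n \<sigma> = Suc k)) sequentially"
      using eventually_ge_at_top[of 1]
    proof eventually_elim
      case (elim n)
      have an: "a n > 0" using apos elim by auto
      have "Pn \<theta> n (\<lambda>\<sigma>. Kcyc n \<sigma> = Suc k) = Tn n (\<lambda>M. if size M = Suc k then Gth \<theta> M else 0) / (fact n * hseq \<theta> n)"
        by (subst Pn_Tn[where E' = "\<lambda>M. size M = Suc k"]) (auto simp: Kcyc_mct)
      also have "\<dots> = fact n * pw a (Suc k) n / fact (Suc k) / (fact n * hseq \<theta> n)"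
        using K_formula[of n "Suc k" \<theta>] by (simp add: a_def)
      also have "\<dots> = (pw a (Suc k) n / a n) * (a n / hseq \<theta> n) / fact (Suc k)"
        using an hpos[of n] fpos[of n] fpos[of "Suc k"] by (simp add: field_simps del: fact_Suc)
      finally show ?case by simp
    qed
    ultimately have lim: "(\<lambda>n. Pn \<theta> n (\<lambda>\<sigma>. Kcyc n \<sigma> = Suc k)) \<longlonglongrightarrow> (real (Suc k) * A ^ k) * inverse (exp A) / fact (Suc k)"
      using Lim_transform_eventually by force
    have "(real (Suc k) * A ^ k) * inverse (exp A) / fact (Suc k) = poisson A k"
    proof -
      define t where "t = real (Suc k)"
      have t: "t > 0" by (simp add: t_def)
      have f: "fact (Suc k) = t * fact k" by (simp add: t_def del: of_nat_Suc)
      have "(t * A ^ k) * inverse (exp A) / (t * fact k) = A ^ k / fact k * exp (- A)"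
        using t by (simp add: exp_minus field_simps)
      then show ?thesis unfolding f t_def[symmetric] poisson_def .
    qed
    then show ?thesis using lim Asum by simp
  qed
  show ?thesis using P1 P2 P3 P4 P5 by blast
qed


end
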